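(* There exist constants $C\ge0$ and $\alpha>0$ such that for all $m\in\mathbb Z^+$ and all $x\ge0$, \[\mathbb P\big(\|X^m\|\ge x\sqrt m\big)\le Ce^{-\alpha x^2},\] where $X^m$ is the depth-first walk of a uniformly random labelled tree $T_m$ on $[m]$ and $\|X^m\|=\max_{0\le i<m}X^m(i)$.
   Context: Ordered depth-first search ${\bf oDFS}(T)$ for a tree $T$ on $[m]$: set $\mathcal O_0=(1)$ (ordered list), $\mathcal A_0=\emptyset$; for $i=0,\dots,m-1$ let $v_i$ be the first element of $\mathcal O_i$, $\mathcal N_i$ the neighbours of $v_i$ outside $\mathcal A_i\cup\mathcal O_i$, $\mathcal A_{i+1}=\mathcal A_i\cup\{v_i\}$, and $\mathcal O_{i+1}$ obtained by deleting $v_i$ from the front of $\mathcal O_i$ and placing $\mathcal N_i$ in increasing order at the front. The depth-first walk is $X(i)=|\mathcal O_i|-1$, $0\le i<m$. *)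

theory Defs
  imports "HOL-Probability.Probability"
begin

definition adj :: "nat set set \<Rightarrow> nat \<Rightarrow> nat \<Rightarrow> bool" where
  "adj E u v \<longleftrightarrow> {u, v} \<in> E \<and> u \<noteq> v"

definition is_cycle :: "nat set set \<Rightarrow> nat list \<Rightarrow> bool" where
  "is_cycle E vs \<longleftrightarrow> length vs \<ge> 3 \<and> distinct vs \<and>
     (\<forall>i < length vs. adj E (vs ! i) (vs ! ((i + 1) mod length vs)))"

definition is_tree :: "nat set \<Rightarrow> nat set set \<Rightarrow> bool" where
  "is_tree V E \<longleftrightarrow>
     (\<forall>e \<in> E. e \<subseteq> V \<and> card e = 2) \<and>
     (\<forall>u \<in> V. \<forall>v \<in> V. (u, v) \<in> {(a, b). adj E a b}\<^sup>*) \<and>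
     (\<nexists>vs. is_cycle E vs)"

definition trees :: "nat \<Rightarrow> nat set set set" where
  "trees m = {E. is_tree {1..m} E}"

text \<open>One step of the ordered depth-first search: state (O_i, A_i).\<close>
definition odfs_step :: "nat set set \<Rightarrow> nat list \<times> nat set \<Rightarrow> nat list \<times> nat set" where
  "odfs_step E s = (let Q = fst s; A = snd s; v = hd Q;
      N = sorted_list_of_set {w. adj E v w \<and> w \<notin> A \<and> w \<notin> set Q}
    in (N @ tl Q, insert v A))"

definition odfs_state :: "nat set set \<Rightarrow> nat \<Rightarrow> nat list \<times> nat set" where
  "odfs_state E i = (odfs_step E ^^ i) ([1], {})"

text \<open>Depth-first walk X(i) = |O_i| - 1 (O_i is nonempty for i < m on a tree).\<close>
definition dfw :: "nat set set \<Rightarrow> nat \<Rightarrow> int" where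
  "dfw E i = int (length (fst (odfs_state E i))) - 1"

definition dfw_norm :: "nat \<Rightarrow> nat set set \<Rightarrow> real" where
  "dfw_norm m E = real_of_int (Max ((dfw E) ` {0..<m}))"

end

theory Submission
  imports Defs "HOL-Library.Transitive_Closure_Table"
begin



definition words :: "nat \<Rightarrow> (nat \<Rightarrow> nat) set" where
  "words m = PiE {2..m} (\<lambda>_. {0..<m})"
definition cnt :: "nat \<Rightarrow> (nat \<Rightarrow> nat) \<Rightarrow> nat \<Rightarrow> nat" where
  "cnt m w i = card {u\<in>{2..m}. w u < i}"
definition Dw :: "nat \<Rightarrow> (nat \<Rightarrow> nat) \<Rightarrow> nat \<Rightarrow> int" where
  "Dw m w i = int (cnt m w i) - int i"
definition valid :: "nat \<Rightarrow> (nat \<Rightarrow> nat) \<Rightarrow> bool" where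
  "valid m w \<longleftrightarrow> (\<forall>i<m. Dw m w i \<ge> 0)"
definition shift :: "nat \<Rightarrow> nat \<Rightarrow> (nat \<Rightarrow> nat) \<Rightarrow> (nat \<Rightarrow> nat)" where
  "shift m s w = (\<lambda>u. if u \<in> {2..m} then (w u + s) mod m else undefined)"

lemma words_lt: "w \<in> words m \<Longrightarrow> u \<in> {2..m} \<Longrightarrow> w u < m"
  by (auto simp: words_def)

lemma finite_words: "finite (words m)"
  by (auto simp: words_def intro!: finite_PiE)

lemma card_words: "card (words m) = m ^ (m - 1)"
  by (simp add: words_def card_PiE)

lemma cnt_mono: "i \<le> j \<Longrightarrow> cnt m w i \<le> cnt m w j"
  unfolding cnt_def by (rule card_mono) auto

lemma cnt_0[simp]: "cnt m w 0 = 0"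
  by (simp add: cnt_def)

lemma cnt_le: "cnt m w i \<le> m - 1"
proof -
  have "cnt m w i \<le> card {2..m}" unfolding cnt_def by (rule card_mono) auto
  thus ?thesis by simp
qed

lemma cnt_m: "w \<in> words m \<Longrightarrow> cnt m w m = m - 1"
proof -
  assume "w \<in> words m"
  hence "{u\<in>{2..m}. w u < m} = {2..m}" using words_lt by blast
  thus ?thesis by (simp add: cnt_def)
qed

lemma cnt_ge: "w \<in> words m \<Longrightarrow> m \<le> i \<Longrightarrow> cnt m w i = m - 1"
  by (metis cnt_m cnt_mono cnt_le le_antisym)

lemma Dw_0[simp]: "Dw m w 0 = 0" by (simp add: Dw_def)
lemma Dw_m: "w \<in> words m \<Longrightarrow> 1 \<le> m \<Longrightarrow> Dw m w m = -1"
  by (simp add: Dw_def cnt_m)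

lemma shift_words: "w \<in> words m \<Longrightarrow> 1 \<le> m \<Longrightarrow> shift m s w \<in> words m"
  by (auto simp: words_def shift_def)

lemma shift_shift: "w \<in> words m \<Longrightarrow> shift m a (shift m b w) = shift m (a + b) w"
  by (auto simp: shift_def words_def fun_eq_iff mod_add_left_eq mod_add_right_eq ac_simps)

lemma shift_mod: "shift m (s mod m) w = shift m s w"
  by (auto simp: shift_def fun_eq_iff mod_add_right_eq)

lemma shift_0: "w \<in> words m \<Longrightarrow> shift m 0 w = w"
  by (auto simp: shift_def words_def fun_eq_iff PiE_def extensional_def Pi_def)

lemma mod_shift_eq:
  fixes x m r :: nat
  assumes "x < m" "r \<le> m"
  shows "(x + (m - r)) mod m = (if r \<le> x then x - r else x + m - r)"
proof (cases "r \<le> x")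
  case True
  hence "x + (m - r) = (x - r) + m" using assms by arith
  hence "(x + (m - r)) mod m = ((x - r) + m) mod m" by (simp only:)
  also have "\<dots> = x - r" using assms by simp
  finally show ?thesis using True by simp
next
  case False thus ?thesis using assms by simp
qed

lemma shift_lt_iff:
  assumes w: "w \<in> words m" and u: "u \<in> {2..m}" and "r \<le> m"
  shows "shift m (m - r) w u < i \<longleftrightarrow> (r \<le> w u \<and> w u - r < i) \<or> (w u < r \<and> w u + m - r < i)"
  using mod_shift_eq[OF words_lt[OF w u] assms(3)] u by (auto simp: shift_def)

lemma cnt_shift1:
  assumes w: "w \<in> words m" and "r + i \<le> m"
  shows "cnt m (shift m (m - r) w) i = cnt m w (r + i) - cnt m w r"
proof -
  have "{u\<in>{2..m}. shift m (m - r) w u < i} = {u\<in>{2..m}. w u < r + i} - {u\<in>{2..m}. w u < r}"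
    using assms words_lt[OF w] shift_lt_iff[OF w _ , of _ r i] by auto
  hence "cnt m (shift m (m - r) w) i = card ({u\<in>{2..m}. w u < r + i} - {u\<in>{2..m}. w u < r})"
    by (simp add: cnt_def)
  also have "\<dots> = cnt m w (r + i) - cnt m w r"
    unfolding cnt_def by (subst card_Diff_subset) auto
  finally show ?thesis .
qed

lemma cnt_shift2:
  assumes w: "w \<in> words m" and "m < r + i" "r \<le> m" "i \<le> m"
  shows "cnt m (shift m (m - r) w) i = cnt m w (r + i - m) + (m - 1 - cnt m w r)"
proof -
  have "{u\<in>{2..m}. shift m (m - r) w u < i} = {u\<in>{2..m}. w u < r + i - m} \<union> ({2..m} - {u\<in>{2..m}. w u < r})"
  proof (rule set_eqI)
    fix u show "u \<in> {u\<in>{2..m}. shift m (m - r) w u < i} \<longleftrightarrow> u \<in> {u\<in>{2..m}. w u < r + i - m} \<union> ({2..m} - {u\<in>{2..m}. w u < r})"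
    proof (cases "u \<in> {2..m}")
      case True
      show ?thesis using shift_lt_iff[OF w True assms(3), of i] words_lt[OF w True] assms by auto
    qed auto
  qed
  hence "cnt m (shift m (m - r) w) i = card ({u\<in>{2..m}. w u < r + i - m} \<union> ({2..m} - {u\<in>{2..m}. w u < r}))"
    by (simp add: cnt_def)
  also have "\<dots> = card {u\<in>{2..m}. w u < r + i - m} + card ({2..m} - {u\<in>{2..m}. w u < r})"
    using assms by (intro card_Un_disjoint) auto
  also have "card ({2..m} - {u\<in>{2..m}. w u < r}) = m - 1 - cnt m w r"
    unfolding cnt_def by (subst card_Diff_subset) auto
  finally show ?thesis by (simp add: cnt_def)
qed

lemma Dw_shift1:
  assumes w: "w \<in> words m" and "r + i \<le> m"
  shows "Dw m (shift m (m - r) w) i = Dw m w (r + i) - Dw m w r"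
  using cnt_shift1[OF assms] cnt_mono[of r "r+i" m w] by (simp add: Dw_def)

lemma Dw_shift2:
  assumes w: "w \<in> words m" and "m < r + i" "r \<le> m" "i \<le> m"
  shows "Dw m (shift m (m - r) w) i = Dw m w (r + i - m) - 1 - Dw m w r"
  using cnt_shift2[OF assms] cnt_le[of m w r] assms by (simp add: Dw_def)

lemma shift_m: "w \<in> words m \<Longrightarrow> shift m m w = w"
  using shift_mod[of m m w] shift_0[of w m] by simp

lemma shift_inv: "w \<in> words m \<Longrightarrow> r \<le> m \<Longrightarrow> shift m r (shift m (m - r) w) = w"
  by (simp add: shift_shift shift_m)

lemma shift_inv2: "w \<in> words m \<Longrightarrow> 1 \<le> m \<Longrightarrow> r \<le> m \<Longrightarrow> shift m (m - r) (shift m r w) = w"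
  by (simp add: shift_shift shift_m)

lemma valid_shift_unique0:
  assumes w: "w \<in> words m" and v: "valid m w" and r: "0 < r" "r < m"
  shows "\<not> valid m (shift m (m - r) w)"
proof
  assume "valid m (shift m (m - r) w)"
  hence "Dw m (shift m (m - r) w) (m - r) \<ge> 0" using r unfolding valid_def by auto
  moreover have "Dw m (shift m (m - r) w) (m - r) = Dw m w m - Dw m w r"
    using Dw_shift1[OF w, of r "m - r"] r by simp
  moreover have "Dw m w r \<ge> 0" using v r unfolding valid_def by auto
  moreover have "Dw m w m = -1" using Dw_m[OF w] r by simp
  ultimately show False by simp
qed

lemma valid_shift_unique:
  assumes w: "w \<in> words m" and v: "valid m w" and v': "valid m (shift m s w)" and m: "1 \<le> m"
  shows "s mod m = 0"
proof (rule ccontr)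
  assume ne: "s mod m \<noteq> 0"
  define r where "r = m - s mod m"
  have r: "0 < r" "r < m" using ne m by (auto simp: r_def)
  have "m - r = s mod m" using m r_def by (simp add: less_imp_le)
  hence "shift m (m - r) w = shift m s w" by (simp add: shift_mod)
  thus False using valid_shift_unique0[OF w v r] v' by simp
qed

lemma exists_valid_shift:
  assumes w: "w \<in> words m" and m: "1 \<le> m"
  shows "\<exists>r\<in>{1..m}. valid m (shift m (m - r) w)"
proof -
  define \<mu> where "\<mu> = Min (Dw m w ` {1..m})"
  have "\<mu> \<in> Dw m w ` {1..m}" unfolding \<mu>_def using m by (intro Min_in) auto
  then obtain r0 where r0: "r0 \<in> {1..m}" "Dw m w r0 = \<mu>" by auto
  define r where "r = (LEAST r. r \<in> {1..m} \<and> Dw m w r = \<mu>)"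
  have r: "r \<in> {1..m}" "Dw m w r = \<mu>"
    using LeastI[of "\<lambda>r. r \<in> {1..m} \<and> Dw m w r = \<mu>" r0] r0 unfolding r_def by auto
  have less: "Dw m w j > \<mu>" if "j \<in> {1..m}" "j < r" for j
  proof -
    have "Dw m w j \<ge> \<mu>" unfolding \<mu>_def using that by (intro Min_le) auto
    moreover have "Dw m w j \<noteq> \<mu>" using not_less_Least[of j "\<lambda>r. r \<in> {1..m} \<and> Dw m w r = \<mu>"] that
      unfolding r_def by auto
    ultimately show ?thesis by simp
  qed
  have ge: "Dw m w j \<ge> \<mu>" if "j \<in> {1..m}" for j
    unfolding \<mu>_def using that by (intro Min_le) auto
  have "valid m (shift m (m - r) w)"
    unfolding valid_def
  proof (intro allI impI)
    fix i assume i: "i < m"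
    show "Dw m (shift m (m - r) w) i \<ge> 0"
    proof (cases "r + i \<le> m")
      case True
      hence "Dw m (shift m (m - r) w) i = Dw m w (r + i) - Dw m w r" by (rule Dw_shift1[OF w])
      moreover have "Dw m w (r + i) \<ge> \<mu>" using ge[of "r + i"] True r by auto
      ultimately show ?thesis using r by simp
    next
      case False
      hence "Dw m (shift m (m - r) w) i = Dw m w (r + i - m) - 1 - Dw m w r"
        using r i by (intro Dw_shift2[OF w]) auto
      moreover have "Dw m w (r + i - m) > \<mu>" using less[of "r + i - m"] False r i by auto
      ultimately show ?thesis using r by simp
    qed
  qed
  thus ?thesis using r by auto
qed

lemma card_valid_lower:
  assumes m: "1 \<le> m"
  shows "m ^ (m - 1) \<le> m * card {w\<in>words m. valid m w}"
proof -
  define V where "V = {w\<in>words m. valid m w}"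
  define rr where "rr w = (SOME r. r \<in> {1..m} \<and> valid m (shift m (m - r) w))" for w
  have rr: "rr w \<in> {1..m} \<and> valid m (shift m (m - rr w) w)" if "w \<in> words m" for w
  proof -
    have "\<exists>r. r \<in> {1..m} \<and> valid m (shift m (m - r) w)" using exists_valid_shift[OF that m] by blast
    thus ?thesis unfolding rr_def by (rule someI_ex)
  qed
  define f where "f w = (shift m (m - rr w) w, rr w)" for w
  have "inj_on f (words m)"
  proof (rule inj_onI)
    fix w w' assume w: "w \<in> words m" and w': "w' \<in> words m" and eq: "f w = f w'"
    hence "rr w = rr w'" by (simp add: f_def)
    hence "shift m (rr w) (shift m (m - rr w) w) = shift m (rr w') (shift m (m - rr w') w')"
      using eq by (simp add: f_def)
    moreover have "shift m (rr w) (shift m (m - rr w) w) = w"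
      using shift_inv[OF w] rr[OF w] by simp
    moreover have "shift m (rr w') (shift m (m - rr w') w') = w'"
      using shift_inv[OF w'] rr[OF w'] by simp
    ultimately show "w = w'" by simp
  qed
  moreover have "f ` words m \<subseteq> V \<times> {1..m}"
  proof
    fix x assume "x \<in> f ` words m"
    then obtain w where w: "w \<in> words m" and x: "x = f w" by auto
    show "x \<in> V \<times> {1..m}" using rr[OF w] shift_words[OF w m] unfolding x f_def V_def by simp
  qed
  moreover have "finite (V \<times> {1..m})" using finite_words unfolding V_def by auto
  ultimately have "card (f ` words m) \<le> card (V \<times> {1..m})"
    by (intro card_mono)
  hence "card (words m) \<le> card (V \<times> {1..m})"
    using card_image[OF \<open>inj_on f (words m)\<close>] by simp
  thus ?thesis by (simp add: card_words card_cartesian_product V_def mult.commute)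
qed

lemma card_valid_bad:
  fixes z :: real
  assumes m: "1 \<le> m" and z: "0 < z"
  shows "m * card {w\<in>words m. valid m w \<and> (\<exists>i<m. z \<le> Dw m w i)}
     \<le> card {u\<in>words m. \<exists>i\<le>m. z \<le> 2 * \<bar>Dw m u i\<bar>}"
proof -
  define Vb where "Vb = {w\<in>words m. valid m w \<and> (\<exists>i<m. z \<le> Dw m w i)}"
  define g where "g p = shift m (snd p) (fst p)" for p :: "(nat \<Rightarrow> nat) \<times> nat"
  have "inj_on g (Vb \<times> {1..m})"
  proof (rule inj_onI)
    fix p p' assume p: "p \<in> Vb \<times> {1..m}" and p': "p' \<in> Vb \<times> {1..m}" and eq: "g p = g p'"
    obtain v r where pv: "p = (v, r)" by (cases p)
    obtain v' r' where pv': "p' = (v', r')" by (cases p')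
    have v: "v \<in> words m" "valid m v" "r \<in> {1..m}" using p pv Vb_def by auto
    have v': "v' \<in> words m" "valid m v'" "r' \<in> {1..m}" using p' pv' Vb_def by auto
    have "shift m r v = shift m r' v'" using eq pv pv' g_def by simp
    hence "shift m (m - r') (shift m r v) = v'" using shift_inv2[OF v'(1) m] v' by auto
    hence "shift m (m - r' + r) v = v'" using shift_shift[OF v(1)] by simp
    hence "(m - r' + r) mod m = 0" using valid_shift_unique[OF v(1) v(2) _ m] v' by auto
    moreover have "0 < m - r' + r" "m - r' + r < 2 * m" using v v' by auto
    ultimately have "m - r' + r = m"
    proof -
      assume md: "(m - r' + r) mod m = 0" and b: "0 < m - r' + r" "m - r' + r < 2 * m"
      show ?thesis
      proof (rule ccontr)
        assume ne: "m - r' + r \<noteq> m"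
        show False
        proof (cases "m - r' + r < m")
          case True thus False using md b by simp
        next
          case False
          define k where "k = m - r' + r - m"
          have "m - r' + r = k + m" "0 < k" "k < m" using False ne b by (auto simp: k_def)
          thus False using md by simp
        qed
      qed
    qed
    hence "r = r'" using v v' by auto
    moreover have "v = v'" using \<open>shift m (m - r' + r) v = v'\<close> \<open>m - r' + r = m\<close> shift_m[OF v(1)] by simp
    ultimately show "p = p'" using pv pv' by simp
  qed
  moreover have "g ` (Vb \<times> {1..m}) \<subseteq> {u\<in>words m. \<exists>i\<le>m. z \<le> 2 * \<bar>Dw m u i\<bar>}"
  proof
    fix x assume "x \<in> g ` (Vb \<times> {1..m})"
    then obtain p where p: "p \<in> Vb \<times> {1..m}" and x0: "x = g p" by auto
    obtain v r where pv: "p = (v, r)" by (cases p)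
    have v: "v \<in> words m" "valid m v" "r \<in> {1..m}" and i: "\<exists>i<m. z \<le> Dw m v i"
      using p pv unfolding Vb_def by auto
    have x: "x = shift m r v" using x0 pv g_def by simp
    have xw: "x \<in> words m" using x shift_words[OF v(1) m] by simp
    have vx: "v = shift m (m - r) x" using x shift_inv2[OF v(1) m] v by auto
    obtain i where i: "i < m" "z \<le> Dw m v i" using i by auto
    have "\<exists>a\<le>m. \<exists>b\<le>m. z \<le> Dw m x a - Dw m x b"
    proof (cases "r + i \<le> m")
      case True
      hence "Dw m v i = Dw m x (r + i) - Dw m x r" using vx Dw_shift1[OF xw] by simp
      hence "z \<le> Dw m x (r + i) - Dw m x r" using i by simp
      moreover have "r + i \<le> m" "r \<le> m" using True v by auto
      ultimately show ?thesis by blast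
    next
      case False
      hence "Dw m v i = Dw m x (r + i - m) - 1 - Dw m x r" using vx Dw_shift2[OF xw] v i by simp
      hence "z \<le> Dw m x (r + i - m) - Dw m x r" using i by simp
      moreover have "r + i - m \<le> m" "r \<le> m" using False v i by auto
      ultimately show ?thesis by blast
    qed
    then obtain a b where ab: "a \<le> m" "b \<le> m" "z \<le> Dw m x a - Dw m x b" by auto
    have "z \<le> 2 * \<bar>Dw m x a\<bar> \<or> z \<le> 2 * \<bar>Dw m x b\<bar>" using ab(3) by linarith
    thus "x \<in> {u\<in>words m. \<exists>i\<le>m. z \<le> 2 * \<bar>Dw m u i\<bar>}" using xw ab by auto
  qed
  moreover have "finite {u\<in>words m. \<exists>i\<le>m. z \<le> 2 * \<bar>Dw m u i\<bar>}" using finite_words by auto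
  ultimately have "card (g ` (Vb \<times> {1..m})) \<le> card {u\<in>words m. \<exists>i\<le>m. z \<le> 2 * \<bar>Dw m u i\<bar>}"
    by (intro card_mono)
  hence "card (Vb \<times> {1..m}) \<le> card {u\<in>words m. \<exists>i\<le>m. z \<le> 2 * \<bar>Dw m u i\<bar>}"
    using card_image[OF \<open>inj_on g (Vb \<times> {1..m})\<close>] by simp
  thus ?thesis by (simp add: card_cartesian_product Vb_def mult.commute)
qed




lemma cnt_diff_card:
  assumes "a \<le> b"
  shows "cnt m w b - cnt m w a = card {u\<in>{2..m}. a \<le> w u \<and> w u < b}"
proof -
  have eq: "{u\<in>{2..m}. a \<le> w u \<and> w u < b} = {u\<in>{2..m}. w u < b} - {u\<in>{2..m}. w u < a}"
    using assms by auto
  have "card ({u\<in>{2..m}. w u < b} - {u\<in>{2..m}. w u < a}) = card {u\<in>{2..m}. w u < b} - card {u\<in>{2..m}. w u < a}"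
    by (rule card_Diff_subset) (use assms in auto)
  thus ?thesis unfolding cnt_def eq by simp
qed

lemma exp_card:
  fixes s :: real
  assumes "finite A"
  shows "exp (s * real (card {u\<in>A. P u})) = (\<Prod>u\<in>A. if P u then exp s else 1)"
proof -
  have "real (card {u\<in>A. P u}) = (\<Sum>u\<in>A. if P u then 1 else 0)"
    using assms by (simp add: sum.If_cases Int_def)
  hence "s * real (card {u\<in>A. P u}) = (\<Sum>u\<in>A. s * (if P u then 1 else 0))"
    by (simp add: sum_distrib_left)
  also have "\<dots> = (\<Sum>u\<in>A. if P u then s else 0)"
    by (rule sum.cong) auto
  finally have "exp (s * real (card {u\<in>A. P u})) = (\<Prod>u\<in>A. exp (if P u then s else 0))"
    by (simp add: exp_sum[OF assms])
  also have "\<dots> = (\<Prod>u\<in>A. if P u then exp s else 1)"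
    by (rule prod.cong) auto
  finally show ?thesis .
qed

lemma sum_if_interval:
  fixes e :: real
  assumes ab: "a \<le> b" "b \<le> m"
  shows "(\<Sum>y\<in>{0..<m}. (if a \<le> y \<and> y < b then e else 1)) = real (b - a) * e + (real m - real (b - a))"
proof -
  have "(\<Sum>y\<in>{0..<m}. (if a \<le> y \<and> y < b then e else 1))
      = (\<Sum>y\<in>{0..<m} \<inter> {y. a \<le> y \<and> y < b}. e) + (\<Sum>y\<in>{0..<m} \<inter> - {y. a \<le> y \<and> y < b}. 1)"
    by (rule sum.If_cases) simp
  also have "{0..<m} \<inter> {y. a \<le> y \<and> y < b} = {a..<b}" using ab by auto
  also have "{0..<m} \<inter> - {y. a \<le> y \<and> y < b} = {0..<m} - {a..<b}" by auto
  also have "card ({0..<m} - {a..<b}) = m - (b - a)" using ab by (subst card_Diff_subset) auto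
  hence "(\<Sum>y\<in>{0..<m} - {a..<b}. (1::real)) = real m - real (b - a)" using ab by simp
  finally show ?thesis by simp
qed

lemma mgf_words:
  fixes s :: real
  assumes ab: "a \<le> b" "b \<le> m"
  shows "(\<Sum>w\<in>words m. exp (s * real (cnt m w b - cnt m w a)))
       = (real (b - a) * exp s + (real m - real (b - a))) ^ (m - 1)"
proof -
  have "(\<Sum>w\<in>words m. exp (s * real (cnt m w b - cnt m w a)))
      = (\<Sum>w\<in>words m. \<Prod>u\<in>{2..m}. (\<lambda>u y. if a \<le> y \<and> y < b then exp s else 1) u (w u))"
  proof (rule sum.cong)
    fix w assume "w \<in> words m"
    show "exp (s * real (cnt m w b - cnt m w a)) = (\<Prod>u\<in>{2..m}. (\<lambda>u y. if a \<le> y \<and> y < b then exp s else 1) u (w u))"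
      using exp_card[of "{2..m}" s "\<lambda>u. a \<le> w u \<and> w u < b"] cnt_diff_card[OF ab(1), of m w] by simp
  qed simp
  also have "\<dots> = (\<Prod>u\<in>{2..m}. \<Sum>y\<in>{0..<m}. (\<lambda>u y. if a \<le> y \<and> y < b then exp s else (1::real)) u y)"
    unfolding words_def by (rule prod_sum_PiE[symmetric]) auto
  also have "\<dots> = (\<Prod>u\<in>{2..m}. real (b - a) * exp s + (real m - real (b - a)))"
    using sum_if_interval[OF ab] by simp
  also have "\<dots> = (real (b - a) * exp s + (real m - real (b - a))) ^ (m - 1)"
    by simp
  finally show ?thesis .
qed

lemma mgf_bound:
  fixes s :: real
  assumes ab: "a \<le> b" "b \<le> m" and m: "1 \<le> m"
  shows "(\<Sum>w\<in>words m. exp (s * real (cnt m w b - cnt m w a)))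
       \<le> real m ^ (m - 1) * exp (real (m - 1) * (real (b - a) / real m) * (exp s - 1))"
proof -
  define \<beta> where "\<beta> = real (b - a) / real m"
  have b0: "0 \<le> \<beta>" "\<beta> \<le> 1" using ab m by (auto simp: \<beta>_def)
  have base: "real (b - a) * exp s + (real m - real (b - a)) = real m * (1 + \<beta> * (exp s - 1))"
    using m by (simp add: \<beta>_def field_simps)
  have nn: "0 \<le> 1 + \<beta> * (exp s - 1)"
  proof -
    have "\<beta> * (exp s - 1) \<ge> \<beta> * (-1)" using b0 by (intro mult_left_mono) auto
    thus ?thesis using b0 by simp
  qed
  have "(real (b - a) * exp s + (real m - real (b - a))) ^ (m - 1) = real m ^ (m - 1) * (1 + \<beta> * (exp s - 1)) ^ (m - 1)"
    by (simp add: base power_mult_distrib)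
  also have "\<dots> \<le> real m ^ (m - 1) * exp (\<beta> * (exp s - 1)) ^ (m - 1)"
    by (intro mult_left_mono power_mono nn) (auto simp: add.commute)
  also have "exp (\<beta> * (exp s - 1)) ^ (m - 1) = exp (real (m - 1) * \<beta> * (exp s - 1))"
    by (simp add: exp_of_nat_mult[symmetric] mult.assoc)
  finally show ?thesis using mgf_words[OF ab, of s] by (simp add: \<beta>_def)
qed

lemma card_exp_markov:
  fixes s c :: real and X :: "(nat \<Rightarrow> nat) \<Rightarrow> real"
  assumes "finite W" "\<And>w. w \<in> W \<Longrightarrow> P w \<Longrightarrow> c \<le> s * X w"
  shows "real (card {w\<in>W. P w}) * exp c \<le> (\<Sum>w\<in>W. exp (s * X w))"
proof -
  have "real (card {w\<in>W. P w}) * exp c = (\<Sum>w\<in>{w\<in>W. P w}. exp c)" by simp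
  also have "\<dots> \<le> (\<Sum>w\<in>{w\<in>W. P w}. exp (s * X w))"
    using assms by (intro sum_mono) auto
  also have "\<dots> \<le> (\<Sum>w\<in>W. exp (s * X w))"
    using assms by (intro sum_mono2) auto
  finally show ?thesis .
qed

lemma tail_upper:
  fixes t :: real
  assumes ab: "a \<le> b" "b \<le> m" and m: "1 \<le> m" and t: "0 \<le> t" "t \<le> real (b - a)" and lp: "0 < real (b - a)"
  shows "real (card {w\<in>words m. real (b - a) + t \<le> real (cnt m w b - cnt m w a)})
        \<le> exp (- (t\<^sup>2 / (4 * real (b - a)))) * real m ^ (m - 1)"
proof -
  define lam where "lam = real (b - a)"
  define s where "s = t / (2 * lam)"
  have s: "0 \<le> s" "s \<le> 1/2" using t lp by (auto simp: s_def lam_def field_simps)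
  have "real (card {w\<in>words m. lam + t \<le> real (cnt m w b - cnt m w a)}) * exp (s * (lam + t))
      \<le> (\<Sum>w\<in>words m. exp (s * real (cnt m w b - cnt m w a)))"
    using s by (intro card_exp_markov finite_words mult_left_mono) auto
  also have "\<dots> \<le> real m ^ (m - 1) * exp (real (m - 1) * (lam / real m) * (exp s - 1))"
    using mgf_bound[OF ab m] by (simp add: lam_def)
  also have "\<dots> \<le> real m ^ (m - 1) * exp (lam * (exp s - 1))"
  proof -
    have "real (m - 1) * (lam / real m) \<le> lam"
      using m lp by (simp add: lam_def field_simps of_nat_diff)
    moreover have "0 \<le> exp s - 1" using s by simp
    ultimately have "real (m - 1) * (lam / real m) * (exp s - 1) \<le> lam * (exp s - 1)"
      by (rule mult_right_mono)
    thus ?thesis by (intro mult_left_mono) auto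
  qed
  finally have 0: "real (card {w\<in>words m. lam + t \<le> real (cnt m w b - cnt m w a)}) * exp (s * (lam + t))
     \<le> real m ^ (m - 1) * exp (lam * (exp s - 1))" .
  hence "real (card {w\<in>words m. lam + t \<le> real (cnt m w b - cnt m w a)})
     \<le> real m ^ (m - 1) * exp (lam * (exp s - 1)) / exp (s * (lam + t))"
    by (simp add: pos_le_divide_eq)
  hence 1: "real (card {w\<in>words m. lam + t \<le> real (cnt m w b - cnt m w a)})
     \<le> real m ^ (m - 1) * exp (lam * (exp s - 1) - s * (lam + t))"
    by (simp add: exp_diff)
  have "exp s \<le> 1 + s + s\<^sup>2" using s by (intro exp_bound) auto
  hence "lam * (exp s - 1) \<le> lam * (s + s\<^sup>2)"
    using lp by (intro mult_left_mono) (auto simp: lam_def)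
  moreover have "lam * (s + s\<^sup>2) - s * (lam + t) = lam * s\<^sup>2 - s * t" by (simp add: algebra_simps)
  ultimately have "lam * (exp s - 1) - s * (lam + t) \<le> lam * s\<^sup>2 - s * t" by linarith
  also have "lam * s\<^sup>2 - s * t = - (t\<^sup>2 / (4 * lam))"
  proof -
    have lpos: "0 < lam" using lp by (simp add: lam_def)
    show ?thesis using lpos by (simp add: s_def power2_eq_square field_simps)
  qed
  finally have "exp (lam * (exp s - 1) - s * (lam + t)) \<le> exp (- (t\<^sup>2 / (4 * lam)))" by simp
  with 1 show ?thesis unfolding lam_def
    by (smt (verit) mult_left_mono zero_le_power of_nat_0_le_iff mult.commute)
qed

lemma exp_neg_bound:
  fixes s :: real
  assumes "0 \<le> s"
  shows "exp (- s) \<le> 1 - s + s\<^sup>2"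
proof -
  have "1 + s \<le> exp s" by simp
  hence "exp (- s) \<le> 1 / (1 + s)" using assms by (simp add: exp_minus field_simps)
  also have "1 / (1 + s) \<le> 1 - s + s\<^sup>2"
  proof -
    have "1 \<le> (1 - s + s\<^sup>2) * (1 + s)" using assms by (simp add: power2_eq_square algebra_simps)
    thus ?thesis using assms by (simp add: field_simps)
  qed
  finally show ?thesis .
qed

lemma tail_lower:
  fixes t :: real
  assumes ab: "a \<le> b" "b \<le> m" and m: "1 \<le> m" and t: "0 \<le> t" "t \<le> real (b - a)" and lp: "0 < real (b - a)"
  shows "real (card {w\<in>words m. real (cnt m w b - cnt m w a) \<le> real (b - a) - t})
        \<le> exp 1 * exp (- (t\<^sup>2 / (4 * real (b - a)))) * real m ^ (m - 1)"
proof -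
  define lam where "lam = real (b - a)"
  have lpos: "0 < lam" using lp by (simp add: lam_def)
  define s where "s = t / (2 * lam)"
  have s: "0 \<le> s" using t lpos by (auto simp: s_def)
  have "real (card {w\<in>words m. real (cnt m w b - cnt m w a) \<le> lam - t}) * exp (- s * (lam - t))
      \<le> (\<Sum>w\<in>words m. exp (- s * real (cnt m w b - cnt m w a)))"
    using s by (intro card_exp_markov finite_words) (auto intro: mult_left_mono)
  also have "\<dots> \<le> real m ^ (m - 1) * exp (real (m - 1) * (lam / real m) * (exp (- s) - 1))"
    using mgf_bound[OF ab m, of "- s"] by (simp add: lam_def)
  also have "\<dots> \<le> real m ^ (m - 1) * exp (lam * (exp (- s) - 1) + 1)"
  proof -
    have "lam - 1 \<le> real (m - 1) * (lam / real m)"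
    proof -
      have "lam \<le> real m" using ab by (simp add: lam_def)
      hence "lam / real m \<le> 1" using m by simp
      moreover have "real (m - 1) * (lam / real m) = lam - lam / real m" using m by (simp add: of_nat_diff field_simps)
      ultimately show ?thesis by linarith
    qed
    moreover have "exp (- s) - 1 \<le> 0" using s by simp
    ultimately have "real (m - 1) * (lam / real m) * (exp (- s) - 1) \<le> (lam - 1) * (exp (- s) - 1)"
      by (rule mult_right_mono_neg)
    also have "(lam - 1) * (exp (- s) - 1) \<le> lam * (exp (- s) - 1) + 1"
    proof -
      have "0 < exp (- s)" by simp
      thus ?thesis by (simp add: algebra_simps)
    qed
    finally show ?thesis by (intro mult_left_mono) auto
  qed
  finally have 0: "real (card {w\<in>words m. real (cnt m w b - cnt m w a) \<le> lam - t}) * exp (- s * (lam - t))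
     \<le> real m ^ (m - 1) * exp (lam * (exp (- s) - 1) + 1)" .
  hence "real (card {w\<in>words m. real (cnt m w b - cnt m w a) \<le> lam - t})
     \<le> real m ^ (m - 1) * exp (lam * (exp (- s) - 1) + 1) / exp (- s * (lam - t))"
    by (simp add: pos_le_divide_eq)
  hence 1: "real (card {w\<in>words m. real (cnt m w b - cnt m w a) \<le> lam - t})
     \<le> real m ^ (m - 1) * exp (lam * (exp (- s) - 1) + 1 + s * (lam - t))"
  proof -
    have "real m ^ (m - 1) * exp (lam * (exp (- s) - 1) + 1) / exp (- s * (lam - t))
      = real m ^ (m - 1) * (exp (lam * (exp (- s) - 1) + 1) / exp (- s * (lam - t)))" by simp
    also have "exp (lam * (exp (- s) - 1) + 1) / exp (- s * (lam - t)) = exp ((lam * (exp (- s) - 1) + 1) - (- s * (lam - t)))"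
      by (rule exp_diff[symmetric])
    finally show ?thesis using \<open>real (card _) \<le> _\<close> by simp
  qed
  have "lam * (exp (- s) - 1) \<le> lam * (- s + s\<^sup>2)"
    using exp_neg_bound[OF s] lpos by (intro mult_left_mono) auto
  moreover have "lam * (- s + s\<^sup>2) + 1 + s * (lam - t) = 1 + (lam * s\<^sup>2 - s * t)" by (simp add: algebra_simps)
  moreover have "lam * s\<^sup>2 - s * t = - (t\<^sup>2 / (4 * lam))"
    using lpos by (simp add: s_def power2_eq_square field_simps)
  ultimately have "lam * (exp (- s) - 1) + 1 + s * (lam - t) \<le> 1 + - (t\<^sup>2 / (4 * lam))" by linarith
  hence "exp (lam * (exp (- s) - 1) + 1 + s * (lam - t)) \<le> exp 1 * exp (- (t\<^sup>2 / (4 * lam)))"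
    by (simp add: exp_add[symmetric])
  hence "real m ^ (m - 1) * exp (lam * (exp (- s) - 1) + 1 + s * (lam - t))
      \<le> real m ^ (m - 1) * (exp 1 * exp (- (t\<^sup>2 / (4 * lam))))"
    by (intro mult_left_mono) auto
  with 1 show ?thesis unfolding lam_def by (simp add: mult.commute mult.left_commute)
qed

lemma tail_abs:
  fixes t :: real
  assumes ab: "a \<le> b" "b \<le> m" and m: "1 \<le> m" and t: "0 \<le> t" "t \<le> real (b - a)"
  shows "real (card {w\<in>words m. t \<le> \<bar>Dw m w b - Dw m w a\<bar>})
        \<le> 4 * exp (- (t\<^sup>2 / (4 * real (b - a)))) * real m ^ (m - 1)"
proof (cases "b = a")
  case True
  hence "t = 0" using t by simp
  have "card {w\<in>words m. t \<le> \<bar>Dw m w b - Dw m w a\<bar>} \<le> card (words m)"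
    using finite_words by (intro card_mono) auto
  hence "real (card {w\<in>words m. t \<le> \<bar>Dw m w b - Dw m w a\<bar>}) \<le> real m ^ (m - 1)"
  proof -
    assume "card {w\<in>words m. t \<le> \<bar>Dw m w b - Dw m w a\<bar>} \<le> card (words m)"
    hence "real (card {w\<in>words m. t \<le> \<bar>Dw m w b - Dw m w a\<bar>}) \<le> real (m ^ (m - 1))"
      unfolding card_words by (simp only: of_nat_le_iff)
    thus ?thesis by simp
  qed
  thus ?thesis using True \<open>t = 0\<close> by (simp add: card_words)
next
  case False
  hence lp: "0 < real (b - a)" using ab by simp
  have diffeq: "Dw m w b - Dw m w a = int (cnt m w b - cnt m w a) - int (b - a)" for w
    using cnt_mono[OF ab(1), of m w] ab by (simp add: Dw_def of_nat_diff)
  have "{w\<in>words m. t \<le> \<bar>Dw m w b - Dw m w a\<bar>} \<subseteq>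
        {w\<in>words m. real (b - a) + t \<le> real (cnt m w b - cnt m w a)} \<union>
        {w\<in>words m. real (cnt m w b - cnt m w a) \<le> real (b - a) - t}"
  proof
    fix w assume "w \<in> {w\<in>words m. t \<le> \<bar>Dw m w b - Dw m w a\<bar>}"
    hence "w \<in> words m" "t \<le> \<bar>real (cnt m w b - cnt m w a) - real (b - a)\<bar>"
      using diffeq[of w] by auto
    thus "w \<in> {w\<in>words m. real (b - a) + t \<le> real (cnt m w b - cnt m w a)} \<union>
        {w\<in>words m. real (cnt m w b - cnt m w a) \<le> real (b - a) - t}" by auto
  qed
  hence "card {w\<in>words m. t \<le> \<bar>Dw m w b - Dw m w a\<bar>} \<le> card ({w\<in>words m. real (b - a) + t \<le> real (cnt m w b - cnt m w a)} \<union>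
        {w\<in>words m. real (cnt m w b - cnt m w a) \<le> real (b - a) - t})"
    using finite_words by (intro card_mono) auto
  also have "\<dots> \<le> card {w\<in>words m. real (b - a) + t \<le> real (cnt m w b - cnt m w a)} +
        card {w\<in>words m. real (cnt m w b - cnt m w a) \<le> real (b - a) - t}"
    by (rule card_Un_le)
  finally have "real (card {w\<in>words m. t \<le> \<bar>Dw m w b - Dw m w a\<bar>}) \<le>
     real (card {w\<in>words m. real (b - a) + t \<le> real (cnt m w b - cnt m w a)}) +
     real (card {w\<in>words m. real (cnt m w b - cnt m w a) \<le> real (b - a) - t})"
    by linarith
  also have "\<dots> \<le> exp (- (t\<^sup>2 / (4 * real (b - a)))) * real m ^ (m - 1) +
      exp 1 * exp (- (t\<^sup>2 / (4 * real (b - a)))) * real m ^ (m - 1)"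
    by (intro add_mono tail_upper tail_lower ab m t lp)
  also have "\<dots> = (1 + exp 1) * (exp (- (t\<^sup>2 / (4 * real (b - a)))) * real m ^ (m - 1))"
    by (simp add: algebra_simps)
  also have "\<dots> \<le> 4 * (exp (- (t\<^sup>2 / (4 * real (b - a)))) * real m ^ (m - 1))"
  proof -
    have "exp (1::real) \<le> 3" using exp_le by simp
    thus ?thesis by (intro mult_right_mono) auto
  qed
  finally show ?thesis by (simp add: mult.assoc)
qed




definition good :: "nat \<Rightarrow> nat \<Rightarrow> nat \<Rightarrow> (nat \<Rightarrow> real) \<Rightarrow> (nat \<Rightarrow> nat) \<Rightarrow> bool" where
  "good m h L t w \<longleftrightarrow> (\<forall>l\<in>{1..L}. \<forall>k. (k + 1) * (h * 2 ^ (L - l)) \<le> m \<longrightarrow>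
      \<bar>real_of_int (Dw m w ((k + 1) * (h * 2 ^ (L - l))) - Dw m w (k * (h * 2 ^ (L - l))))\<bar> < t l)"

lemma chain_level:
  assumes gd: "good m h L t w" and mL: "m < 2 ^ L * h" and tnn: "\<And>l. 0 \<le> t l"
  shows "l \<le> L \<Longrightarrow> q * (h * 2 ^ (L - l)) \<le> m \<Longrightarrow> \<bar>real_of_int (Dw m w (q * (h * 2 ^ (L - l))))\<bar> \<le> (\<Sum>j\<in>{1..l}. t j)"
proof (induction l arbitrary: q)
  case 0
  hence "q * (h * 2 ^ L) \<le> m" by simp
  hence "q = 0" using mL by (metis mult.commute mult_le_mono1 not_le mult_0_right nat_mult_1 less_one not_less_eq_eq le_trans)
  thus ?case by simp
next
  case (Suc l)
  define G where "G = h * 2 ^ (L - Suc l)"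
  have GG: "h * 2 ^ (L - l) = 2 * G"
  proof -
    have "L - l = Suc (L - Suc l)" using Suc.prems by simp
    thus ?thesis by (simp add: G_def)
  qed
  have sumS: "(\<Sum>j\<in>{1..Suc l}. t j) = (\<Sum>j\<in>{1..l}. t j) + t (Suc l)"
    by (simp add: sum.cl_ivl_Suc)
  have qG: "q * G \<le> m" using Suc.prems by (simp add: G_def)
  show ?case
  proof (cases "even q")
    case True
    then obtain q' where q': "q = 2 * q'" by blast
    have "q' * (h * 2 ^ (L - l)) = q * G" using GG q' by simp
    hence "\<bar>real_of_int (Dw m w (q * G))\<bar> \<le> (\<Sum>j\<in>{1..l}. t j)"
      using Suc.IH[of q'] Suc.prems qG by simp
    thus ?thesis using sumS tnn[of "Suc l"] by (simp add: G_def)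
  next
    case False
    then obtain q' where q': "q = 2 * q' + 1" using oddE by blast
    have eq1: "q' * (h * 2 ^ (L - l)) = (2 * q') * G" using GG by simp
    have "(2 * q') * G \<le> m" using qG q' by simp
    hence ih: "\<bar>real_of_int (Dw m w ((2 * q') * G))\<bar> \<le> (\<Sum>j\<in>{1..l}. t j)"
      using Suc.IH[of q'] Suc.prems eq1 by simp
    have "Suc l \<in> {1..L}" using Suc.prems by simp
    hence "\<bar>real_of_int (Dw m w ((2 * q' + 1) * G) - Dw m w ((2 * q') * G))\<bar> < t (Suc l)"
      using gd qG q' unfolding good_def G_def by blast
    hence "\<bar>real_of_int (Dw m w (q * G))\<bar> \<le> (\<Sum>j\<in>{1..l}. t j) + t (Suc l)"
      using ih unfolding q' of_int_diff by (smt (verit))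
    thus ?thesis using sumS by (simp add: G_def)
  qed
qed

lemma chain_all:
  assumes gd: "good m h L t w" and mL: "m < 2 ^ L * h" and tnn: "\<And>l. 0 \<le> t l"
    and h: "1 \<le> h" and w: "w \<in> words m" and m: "1 \<le> m" and i: "i \<le> m"
  shows "\<bar>real_of_int (Dw m w i)\<bar> \<le> (\<Sum>j\<in>{1..L}. t j) + real h"
proof -
  define S where "S = (\<Sum>j\<in>{1..L}. t j)"
  have S0: "0 \<le> S" unfolding S_def using tnn by (intro sum_nonneg) auto
  have grid: "\<bar>real_of_int (Dw m w (q * h))\<bar> \<le> S" if "q * h \<le> m" for q
    using chain_level[OF gd mL tnn, of L q] that by (simp add: S_def)
  define g where "g = (i div h) * h"
  have dm: "i div h * h + i mod h = i" by (rule div_mult_mod_eq)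
  have "i mod h < h" using h by simp
  hence gi: "g \<le> i" "i < g + h" using dm unfolding g_def by linarith+
  have gm: "g \<le> m" using gi i by simp
  have lo: "Dw m w i \<ge> Dw m w g - int (i - g)"
    using cnt_mono[OF gi(1), of m w] gi by (simp add: Dw_def of_nat_diff)
  have up: "real_of_int (Dw m w i) \<le> S + real h"
  proof (cases "g + h \<le> m")
    case True
    have "(i div h + 1) * h \<le> m" using True by (simp add: g_def algebra_simps)
    hence "\<bar>real_of_int (Dw m w ((i div h + 1) * h))\<bar> \<le> S" by (rule grid)
    moreover have "(i div h + 1) * h = g + h" by (simp add: g_def algebra_simps)
    moreover have "Dw m w i \<le> Dw m w (g + h) + int h"
      using cnt_mono[of i "g + h" m w] gi by (simp add: Dw_def)
    hence "real_of_int (Dw m w i) \<le> real_of_int (Dw m w (g + h)) + real h"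
      by (metis of_int_le_iff of_int_add of_int_of_nat_eq)
    ultimately show ?thesis by (smt (verit))
  next
    case False
    have "cnt m w i \<le> m - 1" by (rule cnt_le)
    hence "Dw m w i \<le> int (m - 1) - int i" by (simp add: Dw_def)
    moreover have "int (m - 1) - int i \<le> int h" using False gi m by linarith
    ultimately show ?thesis using S0 by linarith
  qed
  have "\<bar>real_of_int (Dw m w g)\<bar> \<le> S" using grid gm by (simp add: g_def)
  hence "real_of_int (Dw m w i) \<ge> - S - real h" using lo gi by linarith
  with up show ?thesis unfolding S_def by linarith
qed

lemma bad_count:
  assumes m: "1 \<le> m" and h: "1 \<le> h" and tnn: "\<And>l. 0 \<le> t l"
    and tg: "\<And>l. l \<in> {1..L} \<Longrightarrow> t l \<le> real (h * 2 ^ (L - l))"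
  shows "real (card {w\<in>words m. \<not> good m h L t w}) \<le>
     (\<Sum>l\<in>{1..L}. real (m div (h * 2 ^ (L - l))) *
         (4 * exp (- ((t l)\<^sup>2 / (4 * real (h * 2 ^ (L - l))))) * real m ^ (m - 1)))"
proof -
  define g where "g l = h * 2 ^ (L - l)" for l
  have gpos: "0 < g l" for l using h by (simp add: g_def)
  define B where "B l k = {w\<in>words m. t l \<le> \<bar>real_of_int (Dw m w ((k + 1) * g l) - Dw m w (k * g l))\<bar>}" for l k
  have sub: "{w\<in>words m. \<not> good m h L t w} \<subseteq> (\<Union>l\<in>{1..L}. \<Union>k\<in>{..<m div g l}. B l k)"
  proof
    fix w assume "w \<in> {w\<in>words m. \<not> good m h L t w}"
    then obtain l k where w: "w \<in> words m" "l \<in> {1..L}" "(k + 1) * g l \<le> m"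
       "\<not> \<bar>real_of_int (Dw m w ((k + 1) * g l) - Dw m w (k * g l))\<bar> < t l"
      unfolding good_def g_def by auto
    have "k < m div g l" using w(3) less_eq_div_iff_mult_less_eq[OF gpos[of l], of "k+1" m] by simp
    moreover have "w \<in> B l k" using w unfolding B_def by simp
    ultimately show "w \<in> (\<Union>l\<in>{1..L}. \<Union>k\<in>{..<m div g l}. B l k)" using w(2) by blast
  qed
  have "card {w\<in>words m. \<not> good m h L t w} \<le> card (\<Union>l\<in>{1..L}. \<Union>k\<in>{..<m div g l}. B l k)"
    by (rule card_mono[OF _ sub]) (simp add: B_def finite_words)
  also have "\<dots> \<le> (\<Sum>l\<in>{1..L}. card (\<Union>k\<in>{..<m div g l}. B l k))"
    by (rule card_UN_le) simp
  also have "\<dots> \<le> (\<Sum>l\<in>{1..L}. \<Sum>k\<in>{..<m div g l}. card (B l k))"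
    by (intro sum_mono card_UN_le) simp
  finally have 1: "real (card {w\<in>words m. \<not> good m h L t w}) \<le> (\<Sum>l\<in>{1..L}. \<Sum>k\<in>{..<m div g l}. real (card (B l k)))"
    by (simp only: of_nat_sum[symmetric] of_nat_le_iff)
  also have "\<dots> \<le> (\<Sum>l\<in>{1..L}. \<Sum>k\<in>{..<m div g l}. 4 * exp (- ((t l)\<^sup>2 / (4 * real (g l)))) * real m ^ (m - 1))"
  proof (intro sum_mono)
    fix l k assume l: "l \<in> {1..L}" and k: "k \<in> {..<m div g l}"
    have km: "(k + 1) * g l \<le> m" using k less_eq_div_iff_mult_less_eq[OF gpos[of l], of "k+1" m] by simp
    have "real (card (B l k)) \<le> 4 * exp (- ((t l)\<^sup>2 / (4 * real ((k + 1) * g l - k * g l)))) * real m ^ (m - 1)"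
      unfolding B_def of_int_diff[symmetric] of_int_abs[symmetric]
    proof (rule tail_abs)
      show "k * g l \<le> (k + 1) * g l" by simp
      show "(k + 1) * g l \<le> m" by (rule km)
      show "1 \<le> m" by (rule m)
      show "0 \<le> t l" by (rule tnn)
      show "t l \<le> real ((k + 1) * g l - k * g l)" using tg[OF l] by (simp add: g_def)
    qed
    thus "real (card (B l k)) \<le> 4 * exp (- ((t l)\<^sup>2 / (4 * real (g l)))) * real m ^ (m - 1)" by simp
  qed
  also have "\<dots> = (\<Sum>l\<in>{1..L}. real (m div g l) * (4 * exp (- ((t l)\<^sup>2 / (4 * real (g l)))) * real m ^ (m - 1)))"
    by simp
  finally show ?thesis unfolding g_def .
qed

lemma geo_sum_le:
  fixes r :: real
  assumes "0 \<le> r" "r < 1"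
  shows "(\<Sum>l\<in>{1..L}. r ^ (l - 1)) \<le> 1 / (1 - r)"
proof -
  have "(\<Sum>l\<in>{1..L}. r ^ (l - 1)) = (\<Sum>k<L. r ^ k)"
    by (simp add: sum.atLeast1_atMost_eq)
  also have "\<dots> = (1 - r ^ L) / (1 - r)" using assms by (simp add: sum_gp_strict)
  also have "\<dots> \<le> 1 / (1 - r)" using assms by (intro divide_right_mono) auto
  finally show ?thesis .
qed

lemma exp_neg2: "exp (-2::real) \<le> 1/4"
proof -
  have "(2::real) \<le> exp 1" using exp_ge_add_one_self[of "1::real"] by simp
  hence "(2::real) ^ 2 \<le> exp 1 ^ 2" by (intro power_mono) auto
  hence "4 \<le> exp (2::real)" by (simp add: exp_of_nat_mult[symmetric])
  thus ?thesis by (simp add: exp_minus field_simps)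
qed

lemma term_bound:
  fixes y :: real
  assumes m: "1 \<le> m" and h: "1 \<le> h" and l: "l \<in> {1..L}" and mL: "m < 2 ^ L * h"
    and mL': "2 ^ (L - 1) * h \<le> m" and A: "16 \<le> y\<^sup>2 / (1024 * real m)"
  shows "real (m div (h * 2 ^ (L - l))) * (4 * exp (- ((y / 16 * (3/4) ^ (l - 1))\<^sup>2 / (4 * real (h * 2 ^ (L - l))))))
     \<le> 8 * exp (- (y\<^sup>2 / (1024 * real m))) * (1/2) ^ (l - 1)"
proof -
  define g where "g = h * 2 ^ (L - l)"
  define j where "j = l - 1"
  define A' where "A' = y\<^sup>2 / (1024 * real m)"
  have gpos: "0 < g" using h by (simp add: g_def)
  have lj: "l = Suc j" using l by (simp add: j_def)
  have pow: "2 ^ L = 2 ^ l * (2::nat) ^ (L - l)" using l by (simp add: power_add[symmetric])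
  have "m < 2 ^ l * g" using mL pow by (simp add: g_def mult.assoc mult.commute mult.left_commute)
  hence "m div g < 2 ^ l" using div_less_iff_less_mult[OF gpos] by simp
  hence a: "real (m div g) \<le> 2 ^ l" by (metis less_imp_le of_nat_le_iff of_nat_numeral of_nat_power)
  have "2 ^ (L - 1) = 2 ^ j * (2::nat) ^ (L - l)" using l by (simp add: j_def power_add[symmetric])
  hence "g * 2 ^ j \<le> m" using mL' by (simp add: g_def mult.assoc mult.commute mult.left_commute)
  hence gj: "real g * 2 ^ j \<le> real m" by (metis of_nat_le_iff of_nat_mult of_nat_numeral of_nat_power)
  have mpos: "0 < real m" using m by simp
  have c0: "0 \<le> y\<^sup>2 * (9/16) ^ j" by simp
  have pj: "((3/4::real) ^ j)\<^sup>2 = (9/16) ^ j"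
  proof -
    have "((3/4::real) ^ j)\<^sup>2 = ((3/4) ^ 2) ^ j" by (metis power_mult mult.commute)
    thus ?thesis by (simp add: power2_eq_square)
  qed
  have t2: "(y / 16 * (3/4) ^ (l - 1))\<^sup>2 = y\<^sup>2 * (9/16) ^ j / 256"
    unfolding j_def[symmetric] power_mult_distrib pj by (simp add: power2_eq_square)
  have "A' * (9/8) ^ j = y\<^sup>2 * (9/16) ^ j * 2 ^ j / (1024 * real m)"
  proof -
    have "(9/8::real) ^ j = (9/16) ^ j * 2 ^ j" by (simp add: power_mult_distrib[symmetric])
    thus ?thesis by (simp add: A'_def)
  qed
  also have "\<dots> \<le> y\<^sup>2 * (9/16) ^ j * 2 ^ j / (1024 * (real g * 2 ^ j))"
    using c0 gj gpos mpos by (intro divide_left_mono mult_nonneg_nonneg mult_left_mono) auto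
  also have "\<dots> = (y / 16 * (3/4) ^ (l - 1))\<^sup>2 / (4 * real g)"
    unfolding t2 by (simp add: field_simps)
  finally have e1: "A' * (9/8) ^ j \<le> (y / 16 * (3/4) ^ (l - 1))\<^sup>2 / (4 * real g)" .
  have "1 + real j * (1/8) \<le> (1 + 1/8::real) ^ j" by (rule Bernoulli_inequality) simp
  hence "A' * (1 + real j / 8) \<le> A' * (9/8) ^ j" using A by (intro mult_left_mono) (auto simp: A'_def)
  moreover have "A' + 2 * real j \<le> A' * (1 + real j / 8)"
  proof -
    have A16: "16 \<le> A'" using A by (simp add: A'_def)
    hence "16 * real j \<le> A' * real j" by (intro mult_right_mono) auto
    moreover have "A' * (1 + real j / 8) = A' + A' * real j / 8" by (simp add: algebra_simps)
    ultimately show ?thesis by linarith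
  qed
  ultimately have e2: "A' + 2 * real j \<le> (y / 16 * (3/4) ^ (l - 1))\<^sup>2 / (4 * real g)" using e1 by linarith
  have "exp (- ((y / 16 * (3/4) ^ (l - 1))\<^sup>2 / (4 * real g))) \<le> exp (- A' + real j * (-2))"
    using e2 by simp
  also have "\<dots> = exp (- A') * exp (-2) ^ j" by (simp only: exp_add exp_of_nat_mult)

  also have "\<dots> \<le> exp (- A') * (1/4) ^ j" by (intro mult_left_mono power_mono exp_neg2) auto
  finally have b: "exp (- ((y / 16 * (3/4) ^ (l - 1))\<^sup>2 / (4 * real g))) \<le> exp (- A') * (1/4) ^ j" .
  have "real (m div g) * (4 * exp (- ((y / 16 * (3/4) ^ (l - 1))\<^sup>2 / (4 * real g))))
      \<le> 2 ^ l * (4 * (exp (- A') * (1/4) ^ j))"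
    using a b by (intro mult_mono) auto
  also have "\<dots> = 8 * exp (- A') * (2 ^ j * (1/4) ^ j)" by (simp add: lj)
  also have "2 ^ j * (1/4::real) ^ j = (1/2) ^ j" by (simp add: power_mult_distrib[symmetric])
  finally show ?thesis by (simp add: g_def A'_def j_def)
qed


lemma max_ineq_big:
  fixes y :: real
  assumes m: "1 \<le> m" and y: "0 \<le> y" and A: "16 \<le> y\<^sup>2 / (1024 * real m)"
  shows "real (card {w\<in>words m. \<exists>i\<le>m. y \<le> \<bar>real_of_int (Dw m w i)\<bar>})
    \<le> 16 * exp (- (y\<^sup>2 / (1024 * real m))) * real m ^ (m - 1)"
proof -
  have mpos: "0 < real m" using m by simp
  have "16 * (1024 * real m) \<le> y\<^sup>2" using A mpos by (simp add: field_simps)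
  hence y2: "16384 \<le> y\<^sup>2" using m by simp
  have y128: "128 \<le> y"
  proof (rule ccontr)
    assume "\<not> 128 \<le> y"
    hence "y * y < 128 * 128" using y by (intro mult_strict_mono') auto
    thus False using y2 by (simp add: power2_eq_square)
  qed
  define h where "h = nat \<lfloor>y / 8\<rfloor>"
  have hfl: "real h = real_of_int \<lfloor>y / 8\<rfloor>" using y by (simp add: h_def)
  have h1: "real h \<le> y / 8" using of_int_floor_le[of "y / 8"] hfl by linarith
  have h2: "y / 16 \<le> real h"
  proof -
    have "y / 8 - 1 < real_of_int \<lfloor>y / 8\<rfloor>" by linarith
    moreover have "real h = real_of_int \<lfloor>y / 8\<rfloor>" using y by (simp add: h_def)
    ultimately show ?thesis using y128 by linarith
  qed
  have h0: "1 \<le> h" using h2 y128 by linarith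
  define L where "L = (LEAST L. m < 2 ^ L * h)"
  have ex: "m < 2 ^ m * h" using h0 less_exp[of m] by (metis less_le_trans mult.right_neutral mult_le_mono2)
  have mL: "m < 2 ^ L * h" unfolding L_def by (rule LeastI[of _ m], rule ex)
  have mL': "2 ^ (L - 1) * h \<le> m" if "1 \<le> L"
  proof -
    have "L - 1 < L" using that by simp
    hence "\<not> m < 2 ^ (L - 1) * h" unfolding L_def by (rule not_less_Least)
    thus ?thesis by simp
  qed
  define t where "t l = y / 16 * (3/4) ^ (l - 1)" for l :: nat
  have tnn: "0 \<le> t l" for l using y by (simp add: t_def)
  have t_le: "t l \<le> y / 16" for l
  proof -
    have "(3/4::real) ^ (l - 1) \<le> 1" by (rule power_le_one) auto
    thus ?thesis using y by (simp add: t_def mult_left_le)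
  qed
  have tg: "t l \<le> real (h * 2 ^ (L - l))" if "l \<in> {1..L}" for l
  proof -
    have "h * 1 \<le> h * 2 ^ (L - l)" by (intro mult_le_mono2) simp
    hence "real h \<le> real (h * 2 ^ (L - l))" by linarith
    thus ?thesis using t_le[of l] h2 by linarith
  qed
  have sumt: "(\<Sum>j\<in>{1..L}. t j) \<le> y / 4"
  proof -
    have "(\<Sum>j\<in>{1..L}. t j) = y / 16 * (\<Sum>j\<in>{1..L}. (3/4) ^ (j - 1))"
      by (simp add: t_def sum_distrib_left)
    also have "\<dots> \<le> y / 16 * (1 / (1 - 3/4))"
      using y by (intro mult_left_mono geo_sum_le) auto
    finally show ?thesis by simp
  qed
  have sub: "{w\<in>words m. \<exists>i\<le>m. y \<le> \<bar>real_of_int (Dw m w i)\<bar>} \<subseteq> {w\<in>words m. \<not> good m h L t w}"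
  proof
    fix w assume "w \<in> {w\<in>words m. \<exists>i\<le>m. y \<le> \<bar>real_of_int (Dw m w i)\<bar>}"
    then obtain i where w: "w \<in> words m" "i \<le> m" "y \<le> \<bar>real_of_int (Dw m w i)\<bar>" by auto
    show "w \<in> {w\<in>words m. \<not> good m h L t w}"
    proof (simp add: w(1), rule notI)
      assume "good m h L t w"
      hence "\<bar>real_of_int (Dw m w i)\<bar> \<le> (\<Sum>j\<in>{1..L}. t j) + real h"
        by (rule chain_all[where t=t, OF _ mL tnn h0 w(1) m w(2)])
      thus False using w(3) sumt h1 y128 by linarith
    qed
  qed
  have "real (card {w\<in>words m. \<exists>i\<le>m. y \<le> \<bar>real_of_int (Dw m w i)\<bar>}) \<le> real (card {w\<in>words m. \<not> good m h L t w})"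
    using card_mono[OF _ sub] finite_words by simp
  also have "\<dots> \<le> (\<Sum>l\<in>{1..L}. real (m div (h * 2 ^ (L - l))) *
         (4 * exp (- ((t l)\<^sup>2 / (4 * real (h * 2 ^ (L - l))))) * real m ^ (m - 1)))"
    by (rule bad_count[OF m h0 tnn tg])
  also have "\<dots> \<le> (\<Sum>l\<in>{1..L}. 8 * exp (- (y\<^sup>2 / (1024 * real m))) * (1/2) ^ (l - 1) * real m ^ (m - 1))"
  proof (rule sum_mono)
    fix l assume l: "l \<in> {1..L}"
    hence "1 \<le> L" by simp
    have "real (m div (h * 2 ^ (L - l))) * (4 * exp (- ((t l)\<^sup>2 / (4 * real (h * 2 ^ (L - l))))))
      \<le> 8 * exp (- (y\<^sup>2 / (1024 * real m))) * (1/2) ^ (l - 1)"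
      unfolding t_def by (rule term_bound[OF m h0 l mL mL'[OF \<open>1 \<le> L\<close>] A])
    hence "real (m div (h * 2 ^ (L - l))) * (4 * exp (- ((t l)\<^sup>2 / (4 * real (h * 2 ^ (L - l)))))) * real m ^ (m - 1)
      \<le> 8 * exp (- (y\<^sup>2 / (1024 * real m))) * (1/2) ^ (l - 1) * real m ^ (m - 1)"
      by (intro mult_right_mono) auto
    thus "real (m div (h * 2 ^ (L - l))) * (4 * exp (- ((t l)\<^sup>2 / (4 * real (h * 2 ^ (L - l))))) * real m ^ (m - 1))
      \<le> 8 * exp (- (y\<^sup>2 / (1024 * real m))) * (1/2) ^ (l - 1) * real m ^ (m - 1)"
      by (simp add: mult.assoc)
  qed
  also have "\<dots> = (\<Sum>l\<in>{1..L}. (8 * exp (- (y\<^sup>2 / (1024 * real m))) * real m ^ (m - 1)) * (1/2) ^ (l - 1))"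
    by (rule sum.cong) (simp_all add: mult_ac)
  also have "\<dots> = 8 * exp (- (y\<^sup>2 / (1024 * real m))) * real m ^ (m - 1) * (\<Sum>l\<in>{1..L}. (1/2) ^ (l - 1))"
    by (rule sum_distrib_left[symmetric])
  also have "\<dots> \<le> 8 * exp (- (y\<^sup>2 / (1024 * real m))) * real m ^ (m - 1) * (1 / (1 - 1/2))"
    by (intro mult_left_mono geo_sum_le) auto
  finally show ?thesis by simp
qed

lemma max_ineq:
  fixes y :: real
  assumes m: "1 \<le> m" and y: "0 \<le> y"
  shows "real (card {w\<in>words m. \<exists>i\<le>m. y \<le> \<bar>real_of_int (Dw m w i)\<bar>})
    \<le> 16 * exp 16 * exp (- (y\<^sup>2 / (1024 * real m))) * real m ^ (m - 1)"
proof (cases "16 \<le> y\<^sup>2 / (1024 * real m)")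
  case True
  have "real (card {w\<in>words m. \<exists>i\<le>m. y \<le> \<bar>real_of_int (Dw m w i)\<bar>})
    \<le> 16 * exp (- (y\<^sup>2 / (1024 * real m))) * real m ^ (m - 1)" by (rule max_ineq_big[OF m y True])
  also have "\<dots> \<le> 16 * exp 16 * exp (- (y\<^sup>2 / (1024 * real m))) * real m ^ (m - 1)"
  proof -
    have "1 \<le> exp (16::real)" by simp
    thus ?thesis by (intro mult_right_mono) auto
  qed
  finally show ?thesis .
next
  case False
  have "card {w\<in>words m. \<exists>i\<le>m. y \<le> \<bar>real_of_int (Dw m w i)\<bar>} \<le> card (words m)"
    using finite_words by (intro card_mono) auto
  hence "real (card {w\<in>words m. \<exists>i\<le>m. y \<le> \<bar>real_of_int (Dw m w i)\<bar>}) \<le> 1 * real m ^ (m - 1)"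
    by (simp add: card_words flip: of_nat_power)
  also have "\<dots> \<le> 16 * exp 16 * exp (- (y\<^sup>2 / (1024 * real m))) * real m ^ (m - 1)"
  proof (intro mult_right_mono)
    have "1 \<le> exp (16 - y\<^sup>2 / (1024 * real m))" using False by simp
    also have "\<dots> = exp 16 * exp (- (y\<^sup>2 / (1024 * real m)))" by (simp add: exp_diff exp_minus field_simps)
    finally show "1 \<le> 16 * exp 16 * exp (- (y\<^sup>2 / (1024 * real m)))" by simp
  qed auto
  finally show ?thesis .
qed




primrec wst :: "nat \<Rightarrow> (nat \<Rightarrow> nat) \<Rightarrow> nat \<Rightarrow> nat list \<times> nat set" where
  "wst m w 0 = ([1], {})"
| "wst m w (Suc j) = (sorted_list_of_set {u\<in>{2..m}. w u = j} @ tl (fst (wst m w j)),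
                      insert (hd (fst (wst m w j))) (snd (wst m w j)))"

definition vtx :: "nat \<Rightarrow> (nat \<Rightarrow> nat) \<Rightarrow> nat \<Rightarrow> nat" where
  "vtx m w j = hd (fst (wst m w j))"

definition Kset :: "nat \<Rightarrow> (nat \<Rightarrow> nat) \<Rightarrow> nat \<Rightarrow> nat set" where
  "Kset m w j = {u\<in>{2..m}. w u < j}"

definition Cset :: "nat \<Rightarrow> (nat \<Rightarrow> nat) \<Rightarrow> nat \<Rightarrow> nat set" where
  "Cset m w j = {u\<in>{2..m}. w u = j}"

lemma Kset_Suc: "Kset m w (Suc j) = Kset m w j \<union> Cset m w j"
  by (auto simp: Kset_def Cset_def)

lemma Kset_Cset_disj: "Kset m w j \<inter> Cset m w j = {}"
  by (auto simp: Kset_def Cset_def)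

lemma finite_Cset[simp]: "finite (Cset m w j)" by (simp add: Cset_def)
lemma finite_Kset[simp]: "finite (Kset m w j)" by (simp add: Kset_def)

lemma one_notin_K[simp]: "1 \<notin> Kset m w j" by (simp add: Kset_def)
lemma one_notin_C[simp]: "1 \<notin> Cset m w j" by (simp add: Cset_def)

lemma cnt_Kset: "cnt m w j = card (Kset m w j)" by (simp add: cnt_def Kset_def)

lemma C_disj_help: "S \<subseteq> insert 1 (Kset m w j) \<Longrightarrow> Cset m w j \<inter> S = {}"
  by (auto simp: Kset_def Cset_def)

definition winv :: "nat \<Rightarrow> (nat \<Rightarrow> nat) \<Rightarrow> nat \<Rightarrow> bool" where
  "winv m w j \<longleftrightarrow> distinct (fst (wst m w j)) \<and> set (fst (wst m w j)) \<inter> snd (wst m w j) = {}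
     \<and> set (fst (wst m w j)) \<union> snd (wst m w j) = insert 1 (Kset m w j)
     \<and> int (length (fst (wst m w j))) = 1 + Dw m w j
     \<and> snd (wst m w j) = vtx m w ` {..<j} \<and> card (snd (wst m w j)) = j"

lemma winv_0: "winv m w 0"
  by (simp add: winv_def Kset_def Dw_def cnt_def)

lemma winv_Suc:
  assumes inv: "winv m w j" and ne: "fst (wst m w j) \<noteq> []"
  shows "winv m w (Suc j)"
proof -
  define Q where "Q = fst (wst m w j)"
  define A where "A = snd (wst m w j)"
  have Qne: "Q \<noteq> []" using ne by (simp add: Q_def)
  have Qeq: "Q = hd Q # tl Q" using Qne by simp
  have dQ: "distinct Q" and dis: "set Q \<inter> A = {}" and un: "set Q \<union> A = insert 1 (Kset m w j)"
    and len: "int (length Q) = 1 + Dw m w j" and Av: "A = vtx m w ` {..<j}" and cA: "card A = j"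
    using inv unfolding winv_def Q_def[symmetric] A_def[symmetric] by blast+
  have st: "wst m w (Suc j) = (sorted_list_of_set (Cset m w j) @ tl Q, insert (hd Q) A)"
    by (simp add: Q_def A_def Cset_def)
  have setC: "set (sorted_list_of_set (Cset m w j)) = Cset m w j" by simp
  have hdQ: "hd Q \<in> set Q" using Qne by simp
  have tlQ: "set (tl Q) \<subseteq> set Q" by (metis list.set_sel(2) subsetI Qne)
  have hd_tl: "hd Q \<notin> set (tl Q)" using dQ Qeq by (metis distinct.simps(2))
  have CQ: "Cset m w j \<inter> set Q = {}" by (rule C_disj_help) (use un in blast)
  have CA: "Cset m w j \<inter> A = {}" by (rule C_disj_help) (use un in blast)
  have hdA: "hd Q \<notin> A" using hdQ dis by auto
  have d1: "distinct (sorted_list_of_set (Cset m w j) @ tl Q)"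
    using dQ CQ tlQ by (auto simp: distinct_tl)
  have d2: "set (sorted_list_of_set (Cset m w j) @ tl Q) \<inter> insert (hd Q) A = {}"
    using CQ CA hdQ hd_tl dis tlQ by auto
  have d3: "set (sorted_list_of_set (Cset m w j) @ tl Q) \<union> insert (hd Q) A = insert 1 (Kset m w (Suc j))"
  proof -
    have "set (sorted_list_of_set (Cset m w j) @ tl Q) \<union> insert (hd Q) A = Cset m w j \<union> (set (tl Q) \<union> {hd Q}) \<union> A"
      by auto
    also have "set (tl Q) \<union> {hd Q} = set Q" using Qeq by (metis Un_insert_right list.simps(15) sup_bot.right_neutral)
    finally show ?thesis using un by (auto simp: Kset_Suc)
  qed
  have d4: "int (length (sorted_list_of_set (Cset m w j) @ tl Q)) = 1 + Dw m w (Suc j)"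
  proof -
    have "length (sorted_list_of_set (Cset m w j) @ tl Q) = card (Cset m w j) + (length Q - 1)" by simp
    moreover have "cnt m w (Suc j) = cnt m w j + card (Cset m w j)"
      unfolding cnt_Kset Kset_Suc using Kset_Cset_disj by (simp add: card_Un_disjoint)
    moreover have "length Q \<ge> 1" using Qne by (cases Q) auto
    ultimately show ?thesis using len by (simp add: Dw_def of_nat_diff)
  qed
  have d5: "insert (hd Q) A = vtx m w ` {..<Suc j}"
    using Av by (auto simp: vtx_def Q_def lessThan_Suc)
  have d6: "card (insert (hd Q) A) = Suc j"
  proof -
    have "finite A" using Av by simp
    thus ?thesis using hdA cA by simp
  qed
  show ?thesis unfolding winv_def st using d1 d2 d3 d4 d5 d6 by simp
qed

lemma winv_valid:
  assumes v: "valid m w" and j: "j \<le> m"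
  shows "winv m w j \<and> (j < m \<longrightarrow> fst (wst m w j) \<noteq> [])"
  using j
proof (induction j)
  case 0
  thus ?case using winv_0 by simp
next
  case (Suc j)
  hence inv: "winv m w j" and ne: "fst (wst m w j) \<noteq> []" by auto
  have i: "winv m w (Suc j)" by (rule winv_Suc[OF inv ne])
  moreover have "Suc j < m \<longrightarrow> fst (wst m w (Suc j)) \<noteq> []"
  proof
    assume "Suc j < m"
    hence "Dw m w (Suc j) \<ge> 0" using v unfolding valid_def by blast
    moreover have "int (length (fst (wst m w (Suc j)))) = 1 + Dw m w (Suc j)" using i unfolding winv_def by blast
    ultimately have "length (fst (wst m w (Suc j))) > 0" by linarith
    thus "fst (wst m w (Suc j)) \<noteq> []" by (rule iffD1[OF length_greater_0_conv])
  qed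
  ultimately show ?case by simp
qed

definition tree_of :: "nat \<Rightarrow> (nat \<Rightarrow> nat) \<Rightarrow> nat set set" where
  "tree_of m w = (\<lambda>u. {u, vtx m w (w u)}) ` {2..m}"

locale vw =
  fixes m :: nat and w :: "nat \<Rightarrow> nat"
  assumes m1: "1 \<le> m" and ww: "w \<in> words m" and wv: "valid m w"
begin

abbreviation "Q j \<equiv> fst (wst m w j)"
abbreviation "A j \<equiv> snd (wst m w j)"
abbreviation "v j \<equiv> vtx m w j"

lemma inv: "j \<le> m \<Longrightarrow> winv m w j"
  using winv_valid[OF wv] by blast

lemma ne: "j < m \<Longrightarrow> Q j \<noteq> []"
  using winv_valid[OF wv, of j] by simp

lemma QA: "j \<le> m \<Longrightarrow> set (Q j) \<union> A j = insert 1 (Kset m w j)"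
  using inv unfolding winv_def by blast

lemma QA_disj: "j \<le> m \<Longrightarrow> set (Q j) \<inter> A j = {}"
  using inv unfolding winv_def by blast

lemma A_eq: "j \<le> m \<Longrightarrow> A j = v ` {..<j}"
  using inv unfolding winv_def by blast

lemma lenQ: "j \<le> m \<Longrightarrow> int (length (Q j)) = 1 + Dw m w j"
  using inv unfolding winv_def by blast

lemma cardA: "j \<le> m \<Longrightarrow> card (A j) = j"
  using inv unfolding winv_def by blast

lemma Kset_m: "Kset m w m = {2..m}"
  using words_lt[OF ww] by (auto simp: Kset_def)

lemma Qm: "Q m = []"
proof -
  have "int (length (Q m)) = 1 + Dw m w m" by (rule lenQ) simp
  thus ?thesis using Dw_m[OF ww m1] by simp
qed

lemma Am: "A m = {1..m}"
proof -
  have "set (Q m) \<union> A m = insert 1 (Kset m w m)" by (rule QA) simp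
  thus ?thesis using Qm Kset_m m1 by auto
qed

lemma v_img: "v ` {..<m} = {1..m}"
  using A_eq[of m] Am by simp

lemma v_inj: "inj_on v {..<m}"
proof -
  have "card (v ` {..<m}) = card {..<m}" using v_img by simp
  thus ?thesis by (simp add: inj_on_iff_eq_card)
qed

definition pos :: "nat \<Rightarrow> nat" where "pos u = the_inv_into {..<m} v u"

lemma pos_lt: "u \<in> {1..m} \<Longrightarrow> pos u < m"
  unfolding pos_def using the_inv_into_into[OF v_inj, of u "{..<m}"] v_img by auto

lemma v_pos: "u \<in> {1..m} \<Longrightarrow> v (pos u) = u"
  unfolding pos_def using f_the_inv_into_f[OF v_inj, of u] v_img by auto

lemma pos_v: "j < m \<Longrightarrow> pos (v j) = j"
  unfolding pos_def using the_inv_into_f_f[OF v_inj, of j] by auto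

lemma v_range: "j < m \<Longrightarrow> v j \<in> {1..m}"
  using v_img by auto

lemma v_eq_iff: "i < m \<Longrightarrow> j < m \<Longrightarrow> v i = v j \<longleftrightarrow> i = j"
  using v_inj by (auto simp: inj_on_def)

lemma v_in_Q: "j < m \<Longrightarrow> v j \<in> set (Q j)"
  using ne[of j] by (simp add: vtx_def)

lemma w_lt_pos: "u \<in> {2..m} \<Longrightarrow> w u < pos u"
proof -
  assume u: "u \<in> {2..m}"
  hence u1: "u \<in> {1..m}" by auto
  have "pos u < m" using pos_lt[OF u1] .
  hence "v (pos u) \<in> set (Q (pos u))" by (rule v_in_Q)
  hence "u \<in> insert 1 (Kset m w (pos u))" using QA[of "pos u"] v_pos[OF u1] \<open>pos u < m\<close> by auto
  thus ?thesis using u by (auto simp: Kset_def)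
qed

lemma v_in_A: "i < j \<Longrightarrow> j \<le> m \<Longrightarrow> v i \<in> A j"
  using A_eq by auto

lemma C_notin: "x \<in> Cset m w j \<Longrightarrow> j \<le> m \<Longrightarrow> x \<notin> set (Q j) \<and> x \<notin> A j"
proof -
  assume x: "x \<in> Cset m w j" and j: "j \<le> m"
  have "x \<notin> insert 1 (Kset m w j)" using x by (auto simp: Kset_def Cset_def)
  thus ?thesis using QA[OF j] by blast
qed

lemma u_ne_parent: "u \<in> {2..m} \<Longrightarrow> u \<noteq> v (w u)"
proof
  assume u: "u \<in> {2..m}" and eq: "u = v (w u)"
  have "w u < m" using words_lt[OF ww u] .
  from pos_v[OF this] have "pos u = w u" by (simp only: eq[symmetric])
  thus False using w_lt_pos[OF u] by simp
qed

lemma parent_range: "u \<in> {2..m} \<Longrightarrow> v (w u) \<in> {1..m}"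
  using words_lt[OF ww] v_range by auto

lemma adj_G: "adj (tree_of m w) a b \<longleftrightarrow> a \<noteq> b \<and> (\<exists>u\<in>{2..m}. {a, b} = {u, v (w u)})"
  unfolding adj_def tree_of_def by auto

lemma adj_G_cases:
  assumes "adj (tree_of m w) a b"
  shows "(a \<in> {2..m} \<and> b = v (w a)) \<or> (b \<in> {2..m} \<and> a = v (w b))"
  using assms unfolding adj_G doubleton_eq_iff by auto

lemma adj_parent: "u \<in> {2..m} \<Longrightarrow> adj (tree_of m w) u (v (w u)) \<and> adj (tree_of m w) (v (w u)) u"
  using u_ne_parent[of u] unfolding adj_G by (auto simp: insert_commute)

lemma adj_G_range: "adj (tree_of m w) a b \<Longrightarrow> a \<in> {1..m} \<and> b \<in> {1..m}"
  using adj_G_cases parent_range by fastforce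

lemma step_eq:
  assumes j: "j < m"
  shows "{x. adj (tree_of m w) (v j) x \<and> x \<notin> A j \<and> x \<notin> set (Q j)} = Cset m w j"
proof (rule set_eqI, rule iffI)
  fix x assume "x \<in> {x. adj (tree_of m w) (v j) x \<and> x \<notin> A j \<and> x \<notin> set (Q j)}"
  hence ad: "adj (tree_of m w) (v j) x" and xA: "x \<notin> A j" by auto
  show "x \<in> Cset m w j"
    using adj_G_cases[OF ad]
  proof
    assume c: "v j \<in> {2..m} \<and> x = v (w (v j))"
    have "pos (v j) = j" using pos_v[OF j] .
    hence "w (v j) < j" using w_lt_pos[of "v j"] c by simp
    hence "x \<in> A j" using c v_in_A[of "w (v j)" j] j by simp
    thus ?thesis using xA by simp
  next
    assume c: "x \<in> {2..m} \<and> v j = v (w x)"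
    have "w x < m" using words_lt[OF ww] c by simp
    hence "w x = j" using c v_eq_iff[OF j] by simp
    thus ?thesis using c by (simp add: Cset_def)
  qed
next
  fix x assume x: "x \<in> Cset m w j"
  hence x2: "x \<in> {2..m}" and wx: "w x = j" by (auto simp: Cset_def)
  have ad: "adj (tree_of m w) (v j) x" using adj_parent[OF x2] wx by simp
  show "x \<in> {x. adj (tree_of m w) (v j) x \<and> x \<notin> A j \<and> x \<notin> set (Q j)}"
    using ad C_notin[OF x] j by simp
qed

lemma odfs_eq: "j \<le> m \<Longrightarrow> odfs_state (tree_of m w) j = wst m w j"
proof (induction j)
  case 0
  thus ?case by (simp add: odfs_state_def)
next
  case (Suc j)
  hence j: "j < m" by simp
  have "odfs_state (tree_of m w) (Suc j) = odfs_step (tree_of m w) (odfs_state (tree_of m w) j)"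
    by (simp add: odfs_state_def)
  also have "\<dots> = odfs_step (tree_of m w) (wst m w j)" using Suc by simp
  also have "\<dots> = wst m w (Suc j)"
    using step_eq[OF j] by (simp add: odfs_step_def Let_def vtx_def Cset_def)
  finally show ?case .
qed

lemma dfw_eq: "i < m \<Longrightarrow> dfw (tree_of m w) i = Dw m w i"
  using odfs_eq[of i] lenQ[of i] by (simp add: dfw_def)

end


context vw
begin

lemma adj_sym: "adj E a b \<Longrightarrow> adj E b a"
  by (auto simp: adj_def insert_commute)

lemma reach1: "u \<in> {1..m} \<Longrightarrow> (u, 1) \<in> {(a, b). adj (tree_of m w) a b}\<^sup>* \<and> (1, u) \<in> {(a, b). adj (tree_of m w) a b}\<^sup>*"
proof (induction "pos u" arbitrary: u rule: less_induct)
  case less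
  show ?case
  proof (cases "u = 1")
    case True thus ?thesis by simp
  next
    case False
    hence u2: "u \<in> {2..m}" using less.prems by auto
    define p where "p = v (w u)"
    have wu: "w u < m" using words_lt[OF ww u2] .
    have pp: "pos p = w u" unfolding p_def by (rule pos_v[OF wu])
    have "pos p < pos u" using pp w_lt_pos[OF u2] by simp
    moreover have p1: "p \<in> {1..m}" unfolding p_def by (rule parent_range[OF u2])
    ultimately have ih: "(p, 1) \<in> {(a, b). adj (tree_of m w) a b}\<^sup>* \<and> (1, p) \<in> {(a, b). adj (tree_of m w) a b}\<^sup>*"
      using less.hyps by blast
    have a1: "(u, p) \<in> {(a, b). adj (tree_of m w) a b}" and a2: "(p, u) \<in> {(a, b). adj (tree_of m w) a b}"
      using adj_parent[OF u2] by (auto simp: p_def)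
    show ?thesis using ih a1 a2
      by (meson converse_rtrancl_into_rtrancl rtrancl_into_rtrancl)
  qed
qed

lemma adj_down:
  assumes ad: "adj (tree_of m w) a b" and lt: "pos b < pos a"
  shows "b = v (w a)"
  using adj_G_cases[OF ad]
proof
  assume c: "b \<in> {2..m} \<and> a = v (w b)"
  have "w b < m" using words_lt[OF ww] c by simp
  hence "pos a = w b" using c pos_v by simp
  hence "pos a < pos b" using w_lt_pos c by simp
  thus ?thesis using lt by simp
qed simp

lemma pos_inj: "a \<in> {1..m} \<Longrightarrow> b \<in> {1..m} \<Longrightarrow> pos a = pos b \<Longrightarrow> a = b"
  by (metis v_pos)

lemma no_cycle: "\<not> is_cycle (tree_of m w) vs"
proof
  assume cyc: "is_cycle (tree_of m w) vs"
  define n where "n = length vs"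
  have n3: "3 \<le> n" and dv: "distinct vs"
    and ad: "\<And>i. i < n \<Longrightarrow> adj (tree_of m w) (vs ! i) (vs ! ((i + 1) mod n))"
    using cyc unfolding is_cycle_def n_def by auto
  have inm: "vs ! i \<in> {1..m}" if "i < n" for i
    using adj_G_range[OF ad[OF that]] by simp
  define M where "M = Max ((\<lambda>i. pos (vs ! i)) ` {..<n})"
  have "0 \<in> {..<n}" using n3 by simp
  hence "(\<lambda>i. pos (vs ! i)) ` {..<n} \<noteq> {}" by blast
  hence "M \<in> (\<lambda>i. pos (vs ! i)) ` {..<n}" unfolding M_def by (intro Max_in) auto
  then obtain k where k: "k < n" "pos (vs ! k) = M" by auto
  have kmax: "pos (vs ! i) \<le> pos (vs ! k)" if "i < n" for i
  proof -
    have "pos (vs ! i) \<le> M" unfolding M_def using that by (intro Max_ge) auto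
    thus ?thesis using k by simp
  qed
  define s where "s = (if k = n - 1 then 0 else k + 1)"
  define p where "p = (if k = 0 then n - 1 else k - 1)"
  have s_eq: "s = (k + 1) mod n" using k n3 by (auto simp: s_def)
  have p_eq: "(p + 1) mod n = k" using k n3 by (auto simp: p_def)
  have sn: "s < n" "p < n" using k n3 by (auto simp: s_def p_def)
  have sk: "s \<noteq> k" "p \<noteq> k" "s \<noteq> p" using k n3 by (auto simp: s_def p_def)
  have lt: "pos (vs ! j) < pos (vs ! k)" if "j < n" "j \<noteq> k" for j
  proof -
    have "vs ! j \<noteq> vs ! k" using dv that k by (simp add: nth_eq_iff_index_eq n_def)
    hence "pos (vs ! j) \<noteq> pos (vs ! k)" using pos_inj inm that k by blast
    thus ?thesis using kmax[OF that(1)] by simp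
  qed
  have a1: "adj (tree_of m w) (vs ! k) (vs ! s)" using ad[OF k(1)] s_eq by simp
  have a2: "adj (tree_of m w) (vs ! k) (vs ! p)" using adj_sym[OF ad[OF sn(2)]] p_eq by simp
  have "vs ! s = v (w (vs ! k))" by (rule adj_down[OF a1 lt[OF sn(1) sk(1)]])
  moreover have "vs ! p = v (w (vs ! k))" by (rule adj_down[OF a2 lt[OF sn(2) sk(2)]])
  ultimately have "vs ! s = vs ! p" by simp
  thus False using dv sn sk by (simp add: nth_eq_iff_index_eq n_def)
qed

lemma tree_of_tree: "tree_of m w \<in> trees m"
  unfolding trees_def is_tree_def
proof (intro CollectI conjI ballI)
  fix e assume "e \<in> tree_of m w"
  then obtain u where u: "u \<in> {2..m}" and e: "e = {u, v (w u)}" unfolding tree_of_def by auto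
  show "e \<subseteq> {1..m}" using u parent_range[OF u] e by auto
  show "card e = 2" using u_ne_parent[OF u] e by simp
next
  fix a b assume a: "a \<in> {1..m}" and b: "b \<in> {1..m}"
  show "(a, b) \<in> {(a, b). adj (tree_of m w) a b}\<^sup>*"
    using reach1[OF a] reach1[OF b] by (meson rtrancl_trans)
next
  show "\<nexists>vs. is_cycle (tree_of m w) vs" using no_cycle by blast
qed

lemma set_Q_A_K: "j \<le> m \<Longrightarrow> Kset m w j = (set (Q j) \<union> A j) - {1}"
  using QA[of j] by (auto simp: Kset_def)

end

lemma tree_of_inj:
  assumes "vw m w" "vw m w'" and eq: "tree_of m w = tree_of m w'"
  shows "w = w'"
proof -
  interpret a: vw m w by fact
  interpret b: vw m w' by fact
  have K: "Kset m w j = Kset m w' j" if "j \<le> m" for j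
    using a.set_Q_A_K[OF that] b.set_Q_A_K[OF that] a.odfs_eq[OF that] b.odfs_eq[OF that] eq by simp
  have le: "y u \<le> x u" if "vw m x" "vw m y" "\<And>j. j \<le> m \<Longrightarrow> Kset m x j = Kset m y j" "u \<in> {2..m}" for x y u
  proof -
    interpret c: vw m x by fact
    have "x u < m" using words_lt[OF c.ww that(4)] .
    hence "u \<in> Kset m x (Suc (x u))" using that(4) by (simp add: Kset_def)
    hence "u \<in> Kset m y (Suc (x u))" using that(3)[of "Suc (x u)"] \<open>x u < m\<close> by simp
    thus ?thesis by (simp add: Kset_def)
  qed
  show ?thesis
  proof
    fix u show "w u = w' u"
    proof (cases "u \<in> {2..m}")
      case True
      thus ?thesis using le[OF assms(1,2) K True] le[OF assms(2,1) _ True] K by (metis le_antisym)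
    next
      case False
      thus ?thesis using a.ww b.ww by (auto simp: words_def PiE_def extensional_def)
    qed
  qed
qed


lemma rtrancl_path_nth:
  "rtrancl_path r x xs y \<Longrightarrow> (\<forall>i < length xs. r ((x # xs) ! i) ((x # xs) ! Suc i)) \<and> last (x # xs) = y"
proof (induction rule: rtrancl_path.induct)
  case (base x) thus ?case by simp
next
  case (step x y ys z)
  show ?case
  proof (intro conjI allI impI)
    fix i assume i: "i < length (y # ys)"
    show "r ((x # y # ys) ! i) ((x # y # ys) ! Suc i)"
    proof (cases i)
      case 0 thus ?thesis using step by simp
    next
      case (Suc k) thus ?thesis using step i by simp
    qed
  next
    show "last (x # y # ys) = z" using step by simp
  qed
qed

lemma adj_mono: "G \<subseteq> E \<Longrightarrow> adj G a b \<Longrightarrow> adj E a b"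
  by (auto simp: adj_def)

locale tr =
  fixes m :: nat and E :: "nat set set"
  assumes m1: "1 \<le> m" and Et: "E \<in> trees m"
begin

abbreviation "QT j \<equiv> fst (odfs_state E j)"
abbreviation "AT j \<equiv> snd (odfs_state E j)"
abbreviation "Disc j \<equiv> set (QT j) \<union> AT j"
definition NE :: "nat \<Rightarrow> nat set" where
  "NE j = {x. adj E (hd (QT j)) x \<and> x \<notin> AT j \<and> x \<notin> set (QT j)}"

lemma edges: "e \<in> E \<Longrightarrow> e \<subseteq> {1..m} \<and> card e = 2"
  using Et unfolding trees_def is_tree_def by blast

lemma adj_range: "adj E a b \<Longrightarrow> a \<in> {1..m} \<and> b \<in> {1..m}"
  using edges unfolding adj_def by blast

lemma conn: "a \<in> {1..m} \<Longrightarrow> b \<in> {1..m} \<Longrightarrow> (a, b) \<in> {(a, b). adj E a b}\<^sup>*"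
  using Et unfolding trees_def is_tree_def by blast

lemma acyc: "\<not> is_cycle E vs"
  using Et unfolding trees_def is_tree_def by blast

lemma NE_sub: "NE j \<subseteq> {1..m}"
  unfolding NE_def using adj_range by blast

lemma finite_NE: "finite (NE j)"
  using NE_sub finite_subset by blast

lemma st_Suc: "odfs_state E (Suc j) = (sorted_list_of_set (NE j) @ tl (QT j), insert (hd (QT j)) (AT j))"
  by (simp add: odfs_state_def odfs_step_def Let_def NE_def)

definition einv :: "nat \<Rightarrow> bool" where
  "einv j \<longleftrightarrow> distinct (QT j) \<and> set (QT j) \<inter> AT j = {} \<and> Disc j \<subseteq> {1..m} \<and> 1 \<in> Disc j
     \<and> card (AT j) = j \<and> finite (AT j) \<and> (\<forall>a\<in>AT j. \<forall>x. adj E a x \<longrightarrow> x \<in> Disc j)"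

lemma einv_0: "einv 0"
  using m1 by (simp add: einv_def odfs_state_def)

lemma Disc_Suc: "QT j \<noteq> [] \<Longrightarrow> Disc (Suc j) = Disc j \<union> NE j"
proof -
  assume ne: "QT j \<noteq> []"
  have "set (QT j) = insert (hd (QT j)) (set (tl (QT j)))" using ne by (cases "QT j") auto
  thus ?thesis unfolding st_Suc using finite_NE by auto
qed

lemma NE_disj: "NE j \<inter> Disc j = {}"
  unfolding NE_def by auto

lemma einv_Suc:
  assumes inv: "einv j" and ne: "QT j \<noteq> []"
  shows "einv (Suc j)"
proof -
  define Q where "Q = QT j"
  define A where "A = AT j"
  have Qeq: "Q = hd Q # tl Q" using ne by (simp add: Q_def)
  have dQ: "distinct Q" and dis: "set Q \<inter> A = {}" and sub: "set Q \<union> A \<subseteq> {1..m}" and one: "1 \<in> set Q \<union> A"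
    and cA: "card A = j" and fA: "finite A" and cl: "\<forall>a\<in>A. \<forall>x. adj E a x \<longrightarrow> x \<in> set Q \<union> A"
    using inv unfolding einv_def Q_def[symmetric] A_def[symmetric] by blast+
  have NQ: "NE j \<inter> set Q = {}" and NA: "NE j \<inter> A = {}" unfolding NE_def Q_def A_def by auto
  have hdQ: "hd Q \<in> set Q" using Qeq by (metis list.set_intros(1))
  have tlQ: "set (tl Q) \<subseteq> set Q" using Qeq by (metis set_subset_Cons)
  have hd_tl: "hd Q \<notin> set (tl Q)" using dQ Qeq by (metis distinct.simps(2))
  have DS: "Disc (Suc j) = set Q \<union> A \<union> NE j" using Disc_Suc[OF ne] by (simp add: Q_def A_def)
  have s: "QT (Suc j) = sorted_list_of_set (NE j) @ tl Q" "AT (Suc j) = insert (hd Q) A"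
    unfolding st_Suc by (simp_all add: Q_def A_def)
  have i1: "distinct (QT (Suc j))" unfolding s using dQ NQ tlQ finite_NE by (auto simp: distinct_tl)
  have i2: "set (QT (Suc j)) \<inter> AT (Suc j) = {}" unfolding s using NQ NA hdQ hd_tl dis tlQ finite_NE by auto
  have i3: "Disc (Suc j) \<subseteq> {1..m}" unfolding DS using sub NE_sub by blast
  have i4: "1 \<in> Disc (Suc j)" unfolding DS using one by blast
  have "hd Q \<notin> A" using hdQ dis by blast
  hence i5: "card (AT (Suc j)) = Suc j" unfolding s using fA cA by simp
  have i6: "finite (AT (Suc j))" unfolding s using fA by simp
  have i7: "\<forall>a\<in>AT (Suc j). \<forall>x. adj E a x \<longrightarrow> x \<in> Disc (Suc j)"
  proof (intro ballI allI impI)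
    fix a x assume a: "a \<in> AT (Suc j)" and ax: "adj E a x"
    show "x \<in> Disc (Suc j)"
    proof (cases "a = hd Q")
      case True
      show ?thesis
      proof (cases "x \<in> A \<or> x \<in> set Q")
        case True thus ?thesis unfolding DS by blast
      next
        case False
        hence "x \<in> NE j" using ax \<open>a = hd Q\<close> unfolding NE_def Q_def A_def by simp
        thus ?thesis unfolding DS by blast
      qed
    next
      case False
      hence "a \<in> A" using a s by simp
      thus ?thesis using cl ax unfolding DS by blast
    qed
  qed
  show ?thesis unfolding einv_def using i1 i2 i3 i4 i5 i6 i7 by blast
qed

lemma einv_all: "j \<le> m \<Longrightarrow> einv j \<and> (j < m \<longrightarrow> QT j \<noteq> [])"
proof (induction j)
  case 0
  have "QT 0 = [1]" by (simp add: odfs_state_def)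
  thus ?case using einv_0 by simp
next
  case (Suc j)
  hence inv: "einv j" and ne: "QT j \<noteq> []" by auto
  have i: "einv (Suc j)" by (rule einv_Suc[OF inv ne])
  moreover have "QT (Suc j) \<noteq> []" if sm: "Suc j < m"
  proof
    assume emp: "QT (Suc j) = []"
    have cl: "\<forall>a\<in>AT (Suc j). \<forall>x. adj E a x \<longrightarrow> x \<in> AT (Suc j)"
      using i emp unfolding einv_def by simp
    have one: "1 \<in> AT (Suc j)" using i emp unfolding einv_def by simp
    have sub: "AT (Suc j) \<subseteq> {1..m}" using i unfolding einv_def by blast
    have cA: "card (AT (Suc j)) = Suc j" using i unfolding einv_def by blast
    have "AT (Suc j) \<noteq> {1..m}" using cA sm by auto
    then obtain z where z: "z \<in> {1..m}" "z \<notin> AT (Suc j)" using sub by blast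
    have "(1, z) \<in> {(a, b). adj E a b}\<^sup>*" using conn z m1 by simp
    hence "z \<in> AT (Suc j)"
    proof (induction rule: rtrancl_induct)
      case base thus ?case using one .
    next
      case (step y z) thus ?case using cl by blast
    qed
    thus False using z by simp
  qed
  ultimately show ?case by simp
qed

lemma ne: "j < m \<Longrightarrow> QT j \<noteq> []" using einv_all by simp
lemma inv: "j \<le> m \<Longrightarrow> einv j" using einv_all by simp

lemma Disc_mono: "i \<le> j \<Longrightarrow> j \<le> m \<Longrightarrow> Disc i \<subseteq> Disc j"
proof (induction j)
  case 0 thus ?case by simp
next
  case (Suc j)
  show ?case
  proof (cases "i = Suc j")
    case True thus ?thesis by simp
  next
    case False
    hence "Disc i \<subseteq> Disc j" using Suc by simp
    also have "Disc j \<subseteq> Disc (Suc j)" using Disc_Suc[OF ne[of j]] Suc by simp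
    finally show ?thesis .
  qed
qed

lemma Disc_0: "Disc 0 = {1}" by (simp add: odfs_state_def)

lemma Disc_m: "Disc m = {1..m}"
proof -
  have sub: "AT m \<subseteq> {1..m}" and cA: "card (AT m) = m" and sub2: "Disc m \<subseteq> {1..m}"
    using inv[of m] unfolding einv_def by auto
  have "AT m = {1..m}" using sub cA by (intro card_subset_eq) auto
  thus ?thesis using sub2 by auto
qed

definition wE :: "nat \<Rightarrow> nat" where
  "wE u = (if u \<in> {2..m} then (LEAST j. u \<in> Disc (Suc j)) else undefined)"

lemma wE_props:
  assumes u: "u \<in> {2..m}"
  shows "wE u < m" "u \<in> Disc (Suc (wE u))" "u \<notin> Disc (wE u)"
proof -
  have m2: "Suc (m - 1) = m" using m1 by simp
  have ex: "u \<in> Disc (Suc (m - 1))" using Disc_m u m2 by simp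
  have "(LEAST j. u \<in> Disc (Suc j)) \<le> m - 1" by (rule Least_le) (rule ex)
  hence le: "wE u \<le> m - 1" unfolding wE_def using u by simp
  thus "wE u < m" using m1 by simp
  show "u \<in> Disc (Suc (wE u))" unfolding wE_def using u LeastI[of "\<lambda>j. u \<in> Disc (Suc j)", OF ex] by simp
  show "u \<notin> Disc (wE u)"
  proof (cases "wE u")
    case 0 thus ?thesis using Disc_0 u by simp
  next
    case (Suc k)
    have "\<not> u \<in> Disc (Suc k)"
      using not_less_Least[of k "\<lambda>j. u \<in> Disc (Suc j)"] Suc u unfolding wE_def by simp
    thus ?thesis using Suc by simp
  qed
qed

lemma wE_words: "wE \<in> words m"
  unfolding words_def using wE_props(1) by (auto simp: wE_def)

lemma NE_eq: "j < m \<Longrightarrow> NE j = Cset m wE j"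
proof (rule set_eqI, rule iffI)
  fix x assume j: "j < m" and x: "x \<in> NE j"
  have xD: "x \<in> Disc (Suc j)" "x \<notin> Disc j" using x Disc_Suc[OF ne[OF j]] NE_disj[of j] by auto
  have one: "1 \<in> Disc j" using inv[of j] j unfolding einv_def by simp
  have "x \<in> {1..m}" using NE_sub x by blast
  moreover have "x \<noteq> 1" using one xD by blast
  ultimately have x2: "x \<in> {2..m}" by auto
  have "(LEAST j. x \<in> Disc (Suc j)) \<le> j" by (rule Least_le) (rule xD(1))
  hence le: "wE x \<le> j" unfolding wE_def using x2 by simp
  have "\<not> wE x < j"
  proof
    assume "wE x < j"
    hence "Disc (Suc (wE x)) \<subseteq> Disc j" using j by (intro Disc_mono) auto
    thus False using wE_props(2)[OF x2] xD by blast
  qed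
  thus "x \<in> Cset m wE j" using le x2 by (simp add: Cset_def)
next
  fix x assume j: "j < m" and x: "x \<in> Cset m wE j"
  hence x2: "x \<in> {2..m}" and wx: "wE x = j" by (auto simp: Cset_def)
  have "x \<in> Disc (Suc j)" "x \<notin> Disc j" using wE_props[OF x2] wx by auto
  thus "x \<in> NE j" using Disc_Suc[OF ne[OF j]] by auto
qed

lemma odfs_wst: "j \<le> m \<Longrightarrow> odfs_state E j = wst m wE j"
proof (induction j)
  case 0 thus ?case by (simp add: odfs_state_def)
next
  case (Suc j)
  hence j: "j < m" and ih: "odfs_state E j = wst m wE j" by auto
  show ?case unfolding st_Suc using ih NE_eq[OF j] by (simp add: Cset_def)
qed

lemma wE_valid: "valid m wE"
proof -
  have wi: "winv m wE j" if "j \<le> m" for j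
    using that
  proof (induction j)
    case 0 show ?case by (rule winv_0)
  next
    case (Suc j)
    hence "winv m wE j" "j < m" by auto
    moreover have "fst (wst m wE j) \<noteq> []" using ne[OF \<open>j < m\<close>] odfs_wst[of j] \<open>j < m\<close> by simp
    ultimately show ?case using winv_Suc by blast
  qed
  show ?thesis unfolding valid_def
  proof (intro allI impI)
    fix i assume i: "i < m"
    have "int (length (fst (wst m wE i))) = 1 + Dw m wE i" using wi[of i] i unfolding winv_def by simp
    moreover have "fst (wst m wE i) \<noteq> []" using ne[OF i] odfs_wst[of i] i by simp
    ultimately show "0 \<le> Dw m wE i" by (cases "fst (wst m wE i)") auto
  qed
qed

lemma wE_vw: "vw m wE"
  by unfold_locales (use m1 wE_words wE_valid in auto)

lemma tree_sub: "tree_of m wE \<subseteq> E"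
proof
  fix e assume "e \<in> tree_of m wE"
  then obtain u where u: "u \<in> {2..m}" and e: "e = {u, vtx m wE (wE u)}" unfolding tree_of_def by auto
  define j where "j = wE u"
  have j: "j < m" using wE_props(1)[OF u] by (simp add: j_def)
  have "u \<in> NE j" using NE_eq[OF j] u by (simp add: Cset_def j_def)
  hence "adj E (hd (QT j)) u" unfolding NE_def by simp
  moreover have "hd (QT j) = vtx m wE j" using odfs_wst[of j] j by (simp add: vtx_def)
  ultimately show "e \<in> E" using e by (simp add: adj_def j_def insert_commute)
qed

lemma tree_eq: "tree_of m wE = E"
proof (rule antisym[OF tree_sub], rule subsetI, rule ccontr)
  fix e assume eE: "e \<in> E" and eG: "e \<notin> tree_of m wE"
  interpret G: vw m wE by (rule wE_vw)
  have "card e = 2" using edges[OF eE] by simp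
  then obtain a b where e: "e = {a, b}" "a \<noteq> b" unfolding card_2_iff by blast
  have "e \<subseteq> {1..m}" using edges[OF eE] by simp
  hence ab: "a \<in> {1..m}" "b \<in> {1..m}" using e by auto
  have "is_tree {1..m} (tree_of m wE)" using G.tree_of_tree by (simp add: trees_def)
  hence "\<forall>u\<in>{1..m}. \<forall>v\<in>{1..m}. (u, v) \<in> {(x, y). adj (tree_of m wE) x y}\<^sup>*"
    unfolding is_tree_def by (elim conjE)
  hence "(a, b) \<in> {(x, y). adj (tree_of m wE) x y}\<^sup>*" using ab by blast
  hence "(\<lambda>x y. adj (tree_of m wE) x y)\<^sup>*\<^sup>* a b" by (rule iffD2[OF rtranclp_rtrancl_eq])
  hence "\<exists>xs. rtrancl_path (\<lambda>x y. adj (tree_of m wE) x y) a xs b" by (rule iffD1[OF rtranclp_eq_rtrancl_path])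
  then obtain xs where xs: "rtrancl_path (\<lambda>x y. adj (tree_of m wE) x y) a xs b" by blast
  obtain ys where p: "rtrancl_path (\<lambda>x y. adj (tree_of m wE) x y) a ys b" and d: "distinct (a # ys)"
    and "set ys \<subseteq> set xs"
    by (rule rtrancl_path_distinct[OF xs])
  have pn: "\<forall>i < length ys. adj (tree_of m wE) ((a # ys) ! i) ((a # ys) ! Suc i)" and lst: "last (a # ys) = b"
    using rtrancl_path_nth[OF p] by auto
  have ys_ne: "ys \<noteq> []" using lst e by auto
  have len: "2 \<le> length ys"
  proof (rule ccontr)
    assume "\<not> 2 \<le> length ys"
    moreover have "length ys \<noteq> 0" using ys_ne by simp
    ultimately have "length ys = 1" by linarith
    then obtain c where "ys = [c]" by (cases ys) auto
    hence "adj (tree_of m wE) a b" using pn lst by auto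
    hence "e \<in> tree_of m wE" using e by (simp add: adj_def)
    thus False using eG by simp
  qed
  define vs where "vs = a # ys"
  have "is_cycle E vs"
    unfolding is_cycle_def
  proof (intro conjI allI impI)
    show "3 \<le> length vs" using len by (simp add: vs_def)
    show "distinct vs" using d by (simp add: vs_def)
    fix i assume i: "i < length vs"
    show "adj E (vs ! i) (vs ! ((i + 1) mod length vs))"
    proof (cases "i + 1 < length vs")
      case True
      hence "adj (tree_of m wE) (vs ! i) (vs ! Suc i)" using pn by (simp add: vs_def)
      thus ?thesis using True adj_mono[OF tree_sub] by simp
    next
      case False
      hence ii: "i + 1 = length vs" using i by simp
      have "last (a # ys) = (a # ys) ! (length (a # ys) - 1)" by (rule last_conv_nth) simp
      hence "vs ! i = b" using lst ii by (simp add: vs_def)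
      moreover have "vs ! ((i + 1) mod length vs) = a" using ii by (simp add: vs_def)
      moreover have "adj E b a" using eE e by (simp add: adj_def insert_commute)
      ultimately show ?thesis by simp
    qed
  qed
  thus False using acyc by simp
qed

end




lemma trees_image:
  assumes m: "1 \<le> m"
  shows "trees m = tree_of m ` {w\<in>words m. valid m w}"
proof
  show "trees m \<subseteq> tree_of m ` {w\<in>words m. valid m w}"
  proof
    fix E assume E: "E \<in> trees m"
    interpret tr m E using m E by unfold_locales
    have "E = tree_of m wE" using tree_eq by simp
    moreover have "wE \<in> {w\<in>words m. valid m w}" using wE_words wE_valid by simp
    ultimately show "E \<in> tree_of m ` {w\<in>words m. valid m w}" by blast
  qed
next
  show "tree_of m ` {w\<in>words m. valid m w} \<subseteq> trees m"
  proof
    fix E assume "E \<in> tree_of m ` {w\<in>words m. valid m w}"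
    then obtain w where w: "w \<in> words m" "valid m w" and E: "E = tree_of m w" by auto
    interpret vw m w using m w by unfold_locales
    show "E \<in> trees m" using tree_of_tree E by simp
  qed
qed

lemma tree_inj:
  assumes m: "1 \<le> m"
  shows "inj_on (tree_of m) {w\<in>words m. valid m w}"
proof (rule inj_onI)
  fix w w' assume w: "w \<in> {w\<in>words m. valid m w}" and w': "w' \<in> {w\<in>words m. valid m w}"
    and eq: "tree_of m w = tree_of m w'"
  have "vw m w" using m w by unfold_locales auto
  moreover have "vw m w'" using m w' by unfold_locales auto
  ultimately show "w = w'" using tree_of_inj eq by blast
qed

lemma dfw_norm_tree:
  assumes m: "1 \<le> m" and w: "w \<in> words m" "valid m w"
  shows "\<exists>i<m. dfw_norm m (tree_of m w) = real_of_int (Dw m w i)"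
proof -
  interpret vw m w using m w by unfold_locales
  have img: "dfw (tree_of m w) ` {0..<m} = Dw m w ` {0..<m}"
    using dfw_eq by (auto simp: image_iff)
  have "Max (Dw m w ` {0..<m}) \<in> Dw m w ` {0..<m}" using m by (intro Max_in) auto
  then obtain i where i: "i < m" "Max (Dw m w ` {0..<m}) = Dw m w i" by auto
  show ?thesis using i img by (auto simp: dfw_norm_def)
qed

theorem lemma5:
  shows "\<exists>C::real. C \<ge> 0 \<and> (\<exists>\<alpha>::real. \<alpha> > 0 \<and>
     (\<forall>m::nat. m \<ge> 1 \<longrightarrow> (\<forall>x::real. x \<ge> 0 \<longrightarrow>
        measure_pmf.prob (pmf_of_set (trees m)) {E. dfw_norm m E \<ge> x * sqrt (real m)}
          \<le> C * exp (- \<alpha> * x\<^sup>2))))"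
proof (intro exI conjI allI impI)
  define C :: real where "C = 16 * exp 16"
  show "0 \<le> C" by (simp add: C_def)
  show "(0::real) < 1 / 4096" by simp
  fix m :: nat and x :: real
  assume m: "1 \<le> m" and x: "0 \<le> x"
  define V where "V = {w\<in>words m. valid m w}"
  define z where "z = x * sqrt (real m)"
  have z0: "0 \<le> z" using x by (simp add: z_def)
  have finV: "finite V" using finite_words by (simp add: V_def)
  have cV: "real (m ^ (m - 1)) \<le> real m * real (card V)"
    using card_valid_lower[OF m] unfolding V_def by (metis of_nat_le_iff of_nat_mult)
  have Npos: "0 < real m ^ (m - 1)" using m by simp
  have cVpos: "0 < card V"
  proof (rule ccontr)
    assume "\<not> 0 < card V"
    hence "card V = 0" by simp
    hence "real (m ^ (m - 1)) \<le> 0" using cV by simp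
    moreover have "real (m ^ (m - 1)) = real m ^ (m - 1)" by simp
    ultimately show False using Npos by linarith
  qed
  have T: "trees m = tree_of m ` V" using trees_image[OF m] by (simp add: V_def)
  have inj: "inj_on (tree_of m) V" using tree_inj[OF m] by (simp add: V_def)
  have cT: "card (trees m) = card V" using T card_image[OF inj] by simp
  have finT: "finite (trees m)" using T finV by simp
  have neT: "trees m \<noteq> {}" using cT cVpos by auto
  define B where "B = {w\<in>V. \<exists>i<m. z \<le> real_of_int (Dw m w i)}"
  have sub: "trees m \<inter> {E. dfw_norm m E \<ge> z} \<subseteq> tree_of m ` B"
  proof
    fix E assume "E \<in> trees m \<inter> {E. dfw_norm m E \<ge> z}"
    then obtain w where w: "w \<in> V" and E: "E = tree_of m w" and ge: "dfw_norm m E \<ge> z" using T by auto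
    obtain i where i: "i < m" "dfw_norm m (tree_of m w) = real_of_int (Dw m w i)"
      using dfw_norm_tree[OF m] w by (auto simp: V_def)
    hence "w \<in> B" using w ge E by (auto simp: B_def)
    thus "E \<in> tree_of m ` B" using E by simp
  qed
  have finB: "finite B" using finV by (simp add: B_def)
  have cTS: "card (trees m \<inter> {E. dfw_norm m E \<ge> z}) \<le> card B"
    using card_mono[OF _ sub] finB card_image_le[OF finB, of "tree_of m"] by simp
  have prob: "measure_pmf.prob (pmf_of_set (trees m)) {E. dfw_norm m E \<ge> z}
      = real (card (trees m \<inter> {E. dfw_norm m E \<ge> z})) / real (card V)"
    using measure_pmf_of_set[OF neT finT] cT by simp
  show "measure_pmf.prob (pmf_of_set (trees m)) {E. dfw_norm m E \<ge> x * sqrt (real m)}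
          \<le> C * exp (- (1 / 4096) * x\<^sup>2)"
  proof (cases "z = 0")
    case True
    have "real (card (trees m \<inter> {E. dfw_norm m E \<ge> z})) \<le> real (card V)"
      using cT finT by (metis Int_lower1 card_mono of_nat_le_iff)
    hence p1: "measure_pmf.prob (pmf_of_set (trees m)) {E. dfw_norm m E \<ge> z} \<le> 1"
      using prob cVpos by simp
    have x0: "x = 0" using True m x by (simp add: z_def)
    have C1: "1 \<le> C"
    proof -
      have "(1::real) \<le> exp 16" by simp
      thus ?thesis unfolding C_def by linarith
    qed
    have "C * exp (- (1 / 4096) * x\<^sup>2) = C" using x0 by simp
    hence "measure_pmf.prob (pmf_of_set (trees m)) {E. dfw_norm m E \<ge> z} \<le> C * exp (- (1 / 4096) * x\<^sup>2)"
      using p1 C1 by linarith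
    thus ?thesis unfolding z_def .
  next
    case False
    hence zpos: "0 < z" using z0 by simp
    define K where "K = C * exp (- ((z / 2)\<^sup>2 / (1024 * real m)))"
    have Beq: "B = {w\<in>words m. valid m w \<and> (\<exists>i<m. z \<le> real_of_int (Dw m w i))}"
      by (auto simp: B_def V_def)
    have "m * card B \<le> card {u\<in>words m. \<exists>i\<le>m. z \<le> 2 * \<bar>Dw m u i\<bar>}"
      unfolding Beq by (rule card_valid_bad[OF m zpos])
    hence "real (m * card B) \<le> real (card {u\<in>words m. \<exists>i\<le>m. z \<le> 2 * \<bar>Dw m u i\<bar>})"
      by (simp only: of_nat_le_iff)
    hence "real m * real (card B) \<le> real (card {u\<in>words m. \<exists>i\<le>m. z \<le> 2 * \<bar>Dw m u i\<bar>})"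
      by simp
    also have "{u\<in>words m. \<exists>i\<le>m. z \<le> 2 * \<bar>Dw m u i\<bar>} = {u\<in>words m. \<exists>i\<le>m. z / 2 \<le> \<bar>real_of_int (Dw m u i)\<bar>}"
      by auto
    also have "real (card \<dots>) \<le> K * real m ^ (m - 1)"
      using max_ineq[OF m, of "z / 2"] z0 by (simp add: K_def C_def)
    also have "\<dots> \<le> K * (real m * real (card V))"
      using cV by (intro mult_left_mono) (auto simp: K_def C_def)
    finally have "real m * real (card B) \<le> real m * (K * real (card V))" by (simp add: mult_ac)
    hence cB: "real (card B) \<le> K * real (card V)" using m by simp
    have "measure_pmf.prob (pmf_of_set (trees m)) {E. dfw_norm m E \<ge> z} \<le> real (card B) / real (card V)"
      using prob cTS cVpos by (simp add: divide_right_mono)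
    also have "\<dots> \<le> K" using cB cVpos by (simp add: divide_le_eq)
    also have "K = C * exp (- (1 / 4096) * x\<^sup>2)"
    proof -
      have "(z / 2)\<^sup>2 / (1024 * real m) = x\<^sup>2 / 4096"
        using m by (simp add: z_def power_mult_distrib power_divide)
      thus ?thesis by (simp add: K_def)
    qed
    finally show ?thesis by (simp add: z_def)
  qed
qed


end
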